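(* Let $\mathcal{T}$ be a class of trees. If $\mathcal{T}$ is not matching splittable, then $\mathcal{T}$ has unbounded fork number, or unbounded star number, or unbounded $\mathrm{C}$-number.
   Context: Let $T$ be a tree. A $2$-path of length $a$ is a path $x_0,\dots,x_a$ with $\deg(x_0)\ne 2$, $\deg(x_1)=\dots=\deg(x_{a-1})=2$, $\deg(x_a)\ne2$. A source is a vertex of degree $>2$. A ray of length $a$ is a $2$-path $x_0,\dots,x_a$ with $\deg(x_0)>2$ and $\deg(x_a)=1$; $x_0$ is its source. For a source $s$, $\deg_{\mathcal{L}}^a(s)$ is the number of rays of length $a$ with source $s$, $\deg_{\mathcal{L}}(s)=\sum_a\deg_{\mathcal{L}}^a(s)$, and $\deg_{\overline{\mathcal{L}}}(s)=\deg(s)-\deg_{\mathcal{L}}(s)$. Forks: for positive integers $a,b$, a source $s$ is an $a$-$b$-fork if $\deg_{\overline{\mathcal{L}}}(s)=1$ and either $a\ne b$ and $\deg_{\mathcal{L}}^a(s),\deg_{\mathcal{L}}^b(s)>0$, or $a=b$ and $\deg_{\mathcal{L}}^a(s)>1$. $\mathrm{F}_{a,b}(T)$ is the maximum size of an independent set consisting of $a$-$b$-forks. A class $\mathcal{T}$ has unbounded fork number if for every $B$ there are $a,b$ and $T\in\mathcal{T}$ with $\mathrm{F}_{a,b}(T)\ge B$. Stars: for $c\ge3$, a $c$-star of size $k$ is a collection of $k$ distinct rays of length $c$ with a common source; $\mathrm{S}_c(T)$ is the maximum size of a $c$-star in $T$. $\mathcal{T}$ has unbounded star number if for every $B$ there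 exist $c\ge3$ and $T\in\mathcal{T}$ with $\mathrm{S}_c(T)\ge B$. C-gadgets: a $\mathrm{C}$-gadget of order $d$ and length $k$ is a path $x_0,\dots,x_k$ in $T$ such that each inner vertex $x_i$ ($1\le i\le k-1$) either has $\deg(x_i)=2$, or is a source such that every neighbour $v\in N(x_i)\setminus\{x_{i-1},x_{i+1}\}$ is contained in a ray of length at most $d$ from $x_i$ to a leaf. $\mathrm{C}_d(T)$ is the length of the longest $\mathrm{C}$-gadget of order $d$ in $T$. $\mathcal{T}$ has unbounded $\mathrm{C}$-number if there exists $d>0$ such that for every $B$ there is $T\in\mathcal{T}$ with $\mathrm{C}_d(T)\ge B$. The matching-split number of a graph $H$ is the minimum size of $S\subseteq V(H)$ such that every vertex of $H[V(H)\setminus S]$ has degree at most $1$; $\mathcal{T}$ is matching splittable if this number is bounded over $\mathcal{T}$. *)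

theory Defs
  imports Main
begin

type_synonym 'a graph = "'a set \<times> 'a set set"

definition verts :: "'a graph \<Rightarrow> 'a set" where "verts G = fst G"
definition edges :: "'a graph \<Rightarrow> 'a set set" where "edges G = snd G"

definition is_graph :: "'a graph \<Rightarrow> bool" where
  "is_graph G \<longleftrightarrow> finite (verts G) \<and>
     (\<forall>e\<in>edges G. \<exists>u v. u \<noteq> v \<and> e = {u, v} \<and> u \<in> verts G \<and> v \<in> verts G)"

definition deg :: "'a graph \<Rightarrow> 'a \<Rightarrow> nat" where
  "deg G v = card {u. {u, v} \<in> edges G}"

text \<open>A path x_0,...,x_k (as the list [x_0,...,x_k]): distinct vertices, consecutive ones adjacent.
  Its length is k = length xs - 1.\<close>
definition is_path :: "'a graph \<Rightarrow> 'a list \<Rightarrow> bool" where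
  "is_path G xs \<longleftrightarrow> xs \<noteq> [] \<and> distinct xs \<and> set xs \<subseteq> verts G \<and>
     (\<forall>i. Suc i < length xs \<longrightarrow> {xs ! i, xs ! Suc i} \<in> edges G)"

definition is_cycle :: "'a graph \<Rightarrow> 'a list \<Rightarrow> bool" where
  "is_cycle G xs \<longleftrightarrow> is_path G xs \<and> length xs \<ge> 3 \<and> {last xs, hd xs} \<in> edges G"

definition connected_graph :: "'a graph \<Rightarrow> bool" where
  "connected_graph G \<longleftrightarrow> (\<forall>u\<in>verts G. \<forall>v\<in>verts G.
      \<exists>xs. is_path G xs \<and> hd xs = u \<and> last xs = v)"

definition is_tree :: "'a graph \<Rightarrow> bool" where
  "is_tree G \<longleftrightarrow> is_graph G \<and> verts G \<noteq> {} \<and> connected_graph G \<and> (\<nexists>xs. is_cycle G xs)"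

definition independent :: "'a graph \<Rightarrow> 'a set \<Rightarrow> bool" where
  "independent G I \<longleftrightarrow> I \<subseteq> verts G \<and> (\<forall>u\<in>I. \<forall>v\<in>I. {u, v} \<notin> edges G)"

definition two_path :: "'a graph \<Rightarrow> nat \<Rightarrow> 'a list \<Rightarrow> bool" where
  "two_path G a xs \<longleftrightarrow> is_path G xs \<and> length xs = Suc a \<and> a \<ge> 1 \<and>
     deg G (xs ! 0) \<noteq> 2 \<and> (\<forall>i. 1 \<le> i \<and> i < a \<longrightarrow> deg G (xs ! i) = 2) \<and> deg G (xs ! a) \<noteq> 2"

definition is_source :: "'a graph \<Rightarrow> 'a \<Rightarrow> bool" where
  "is_source G s \<longleftrightarrow> s \<in> verts G \<and> deg G s > 2"

definition ray :: "'a graph \<Rightarrow> nat \<Rightarrow> 'a \<Rightarrow> 'a list \<Rightarrow> bool" where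
  "ray G a s xs \<longleftrightarrow> two_path G a xs \<and> xs ! 0 = s \<and> deg G s > 2 \<and> deg G (xs ! a) = 1"

definition degL_len :: "'a graph \<Rightarrow> nat \<Rightarrow> 'a \<Rightarrow> nat" where
  "degL_len G a s = card {xs. ray G a s xs}"

definition degL :: "'a graph \<Rightarrow> 'a \<Rightarrow> nat" where
  "degL G s = card {xs. \<exists>a. ray G a s xs}"

definition degLbar :: "'a graph \<Rightarrow> 'a \<Rightarrow> nat" where
  "degLbar G s = deg G s - degL G s"

definition is_fork :: "'a graph \<Rightarrow> nat \<Rightarrow> nat \<Rightarrow> 'a \<Rightarrow> bool" where
  "is_fork G a b s \<longleftrightarrow> is_source G s \<and> degLbar G s = 1 \<and>
     ((a \<noteq> b \<and> degL_len G a s > 0 \<and> degL_len G b s > 0) \<or> (a = b \<and> degL_len G a s > 1))"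

definition fork_number :: "'a graph \<Rightarrow> nat \<Rightarrow> nat \<Rightarrow> nat" where
  "fork_number G a b = Max {card I | I. independent G I \<and> (\<forall>s\<in>I. is_fork G a b s)}"

definition unbounded_fork_number :: "'a graph set \<Rightarrow> bool" where
  "unbounded_fork_number \<T> \<longleftrightarrow>
     (\<forall>B::nat. \<exists>a b T. a > 0 \<and> b > 0 \<and> T \<in> \<T> \<and> fork_number T a b \<ge> B)"

definition is_star :: "'a graph \<Rightarrow> nat \<Rightarrow> 'a list set \<Rightarrow> bool" where
  "is_star G c R \<longleftrightarrow> (\<exists>s. \<forall>xs\<in>R. ray G c s xs)"

definition star_number :: "'a graph \<Rightarrow> nat \<Rightarrow> nat" where
  "star_number G c = Max {card R | R. finite R \<and> is_star G c R}"

definition unbounded_star_number :: "'a graph set \<Rightarrow> bool" where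
  "unbounded_star_number \<T> \<longleftrightarrow>
     (\<forall>B::nat. \<exists>c T. c \<ge> 3 \<and> T \<in> \<T> \<and> star_number T c \<ge> B)"

definition C_gadget :: "'a graph \<Rightarrow> nat \<Rightarrow> nat \<Rightarrow> 'a list \<Rightarrow> bool" where
  "C_gadget G d k xs \<longleftrightarrow> is_path G xs \<and> length xs = Suc k \<and>
     (\<forall>i. 1 \<le> i \<and> i < k \<longrightarrow>
        deg G (xs ! i) = 2 \<or>
        (is_source G (xs ! i) \<and>
         (\<forall>v. {v, xs ! i} \<in> edges G \<and> v \<noteq> xs ! (i - 1) \<and> v \<noteq> xs ! Suc i \<longrightarrow>
            (\<exists>a r. a \<le> d \<and> ray G a (xs ! i) r \<and> v \<in> set r))))"

definition C_number :: "'a graph \<Rightarrow> nat \<Rightarrow> nat" where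
  "C_number G d = Max {k. \<exists>xs. C_gadget G d k xs}"

definition unbounded_C_number :: "'a graph set \<Rightarrow> bool" where
  "unbounded_C_number \<T> \<longleftrightarrow>
     (\<exists>d>0. \<forall>B::nat. \<exists>T\<in>\<T>. C_number T d \<ge> B)"

definition matching_split_number :: "'a graph \<Rightarrow> nat" where
  "matching_split_number G = Min {card S | S. S \<subseteq> verts G \<and>
      (\<forall>v\<in>verts G - S. card {u \<in> verts G - S. {u, v} \<in> edges G} \<le> 1)}"

definition matching_splittable :: "'a graph set \<Rightarrow> bool" where
  "matching_splittable \<T> \<longleftrightarrow> (\<exists>B::nat. \<forall>T\<in>\<T>. matching_split_number T \<le> B)"

end

theory Submission
  imports Defs
begin


definition nbrs :: "'a graph \<Rightarrow> 'a \<Rightarrow> 'a set" where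
  "nbrs G v = {u. {u, v} \<in> edges G}"

lemma deg_nbrs: "deg G v = card (nbrs G v)"
  by (simp add: deg_def nbrs_def)

lemma nbrs_sym: "u \<in> nbrs G v \<longleftrightarrow> v \<in> nbrs G u"
  by (simp add: nbrs_def insert_commute)

lemma edge_verts:
  assumes "is_graph G" "{u, v} \<in> edges G"
  shows "u \<in> verts G \<and> v \<in> verts G \<and> u \<noteq> v"
proof -
  have "\<forall>e\<in>edges G. \<exists>u v. u \<noteq> v \<and> e = {u, v} \<and> u \<in> verts G \<and> v \<in> verts G"
    using assms(1) by (simp add: is_graph_def)
  then have "\<exists>a b. a \<noteq> b \<and> {u, v} = {a, b} \<and> a \<in> verts G \<and> b \<in> verts G"
    using assms(2) by (rule bspec)
  then obtain a b where ab: "a \<noteq> b" and eq: "{u, v} = {a, b}" and av: "a \<in> verts G" and bv: "b \<in> verts G"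
    by blast
  have "u \<in> {a, b}" by (simp add: eq[symmetric])
  moreover have "v \<in> {a, b}" by (simp add: eq[symmetric])
  moreover have "u \<noteq> v"
  proof
    assume "u = v"
    have "a \<in> {u, v}" "b \<in> {u, v}" by (simp_all add: eq)
    then show False using ab \<open>u = v\<close> by simp
  qed
  ultimately show ?thesis using av bv by auto
qed

lemma nbrs_sub: "is_graph G \<Longrightarrow> nbrs G v \<subseteq> verts G"
proof
  fix u assume "is_graph G" "u \<in> nbrs G v"
  then have "{u, v} \<in> edges G" by (simp add: nbrs_def)
  then show "u \<in> verts G" using edge_verts[OF \<open>is_graph G\<close>] by simp
qed

lemma finite_verts: "is_graph G \<Longrightarrow> finite (verts G)"
  by (simp add: is_graph_def)

lemma finite_nbrs: "is_graph G \<Longrightarrow> finite (nbrs G v)"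
  using nbrs_sub finite_verts by (rule finite_subset)

lemma nbrs_not_self: "is_graph G \<Longrightarrow> u \<in> nbrs G v \<Longrightarrow> u \<noteq> v"
proof -
  assume "is_graph G" "u \<in> nbrs G v"
  then have "{u, v} \<in> edges G" by (simp add: nbrs_def)
  then show "u \<noteq> v" using edge_verts[OF \<open>is_graph G\<close>] by simp
qed

lemma card1_unique: "card A = 1 \<Longrightarrow> x \<in> A \<Longrightarrow> y \<in> A \<Longrightarrow> x = y"
proof -
  assume "card A = 1" "x \<in> A" "y \<in> A"
  from \<open>card A = 1\<close> obtain a where "A = {a}" by (rule card_1_singletonE)
  then show ?thesis using \<open>x \<in> A\<close> \<open>y \<in> A\<close> by simp
qed

lemma card2_cases: "card A = 2 \<Longrightarrow> x \<in> A \<Longrightarrow> y \<in> A \<Longrightarrow> x \<noteq> y \<Longrightarrow> z \<in> A \<Longrightarrow> z = x \<or> z = y"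
proof -
  assume "card A = 2" "x \<in> A" "y \<in> A" "x \<noteq> y" "z \<in> A"
  from \<open>card A = 2\<close> obtain a b where "A = {a, b}" by (auto simp: card_2_iff)
  then have "x = a \<or> x = b" "y = a \<or> y = b" "z = a \<or> z = b"
    using \<open>x \<in> A\<close> \<open>y \<in> A\<close> \<open>z \<in> A\<close> by auto
  then show ?thesis using \<open>x \<noteq> y\<close> by auto
qed

lemma card2_other: "card A = 2 \<Longrightarrow> p \<in> A \<Longrightarrow> x \<in> A \<Longrightarrow> y \<in> A \<Longrightarrow> x \<noteq> p \<Longrightarrow> y \<noteq> p \<Longrightarrow> x = y"
proof -
  assume a: "card A = 2" "p \<in> A" "x \<in> A" "y \<in> A" "x \<noteq> p" "y \<noteq> p"
  have "y = p \<or> y = x" by (rule card2_cases[of A p x y]) (use a in auto)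
  then show ?thesis using a by simp
qed

lemma path_edge: "is_path G xs \<Longrightarrow> Suc i < length xs \<Longrightarrow> {xs ! i, xs ! Suc i} \<in> edges G"
  by (simp add: is_path_def)

lemma path_nbr1: "is_path G xs \<Longrightarrow> Suc i < length xs \<Longrightarrow> xs ! i \<in> nbrs G (xs ! Suc i)"
  by (simp add: is_path_def nbrs_def)

lemma path_nbr2: "is_path G xs \<Longrightarrow> Suc i < length xs \<Longrightarrow> xs ! Suc i \<in> nbrs G (xs ! i)"
  by (simp add: is_path_def nbrs_def insert_commute)

lemma path_len: "is_graph G \<Longrightarrow> is_path G xs \<Longrightarrow> length xs \<le> card (verts G)"
proof -
  assume g: "is_graph G" and p: "is_path G xs"
  have "card (set xs) \<le> card (verts G)" using p finite_verts[OF g] by (intro card_mono) (auto simp: is_path_def)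
  moreover have "card (set xs) = length xs" using p by (simp add: is_path_def distinct_card)
  ultimately show ?thesis by simp
qed

lemma path_rev: "is_path G xs \<Longrightarrow> is_path G (rev xs)"
proof -
  assume p: "is_path G xs"
  have e: "\<forall>i. Suc i < length xs \<longrightarrow> {xs ! i, xs ! Suc i} \<in> edges G" using p by (simp add: is_path_def)
  have "{rev xs ! i, rev xs ! Suc i} \<in> edges G" if i: "Suc i < length (rev xs)" for i
  proof -
    let ?j = "length xs - Suc (Suc i)"
    have "Suc ?j < length xs" using i by simp
    then have "{xs ! ?j, xs ! Suc ?j} \<in> edges G" using e by blast
    moreover have "Suc ?j = length xs - Suc i" using i by simp
    moreover have "rev xs ! i = xs ! (length xs - Suc i)" using i by (simp add: rev_nth)
    moreover have "rev xs ! Suc i = xs ! ?j" using i by (simp add: rev_nth)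
    ultimately show ?thesis by (simp add: insert_commute)
  qed
  then show ?thesis using p by (simp add: is_path_def)
qed

lemma path_drop: "is_path G xs \<Longrightarrow> j < length xs \<Longrightarrow> is_path G (drop j xs)"
proof -
  assume p: "is_path G xs" and j: "j < length xs"
  have e: "\<forall>i. Suc i < length xs \<longrightarrow> {xs ! i, xs ! Suc i} \<in> edges G" using p by (simp add: is_path_def)
  have "{drop j xs ! i, drop j xs ! Suc i} \<in> edges G" if i: "Suc i < length (drop j xs)" for i
  proof -
    have "Suc (j + i) < length xs" using i by simp
    then have "{xs ! (j + i), xs ! Suc (j + i)} \<in> edges G" using e by blast
    then show ?thesis using i j by simp
  qed
  moreover have "set (drop j xs) \<subseteq> set xs" by (rule set_drop_subset)
  ultimately show ?thesis using p j by (auto simp add: is_path_def)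
qed

lemma path_snoc: "is_path G xs \<Longrightarrow> y \<notin> set xs \<Longrightarrow> {last xs, y} \<in> edges G \<Longrightarrow> y \<in> verts G \<Longrightarrow> is_path G (xs @ [y])"
proof -
  assume p: "is_path G xs" and y: "y \<notin> set xs" and ey: "{last xs, y} \<in> edges G" and yv: "y \<in> verts G"
  have e: "\<forall>i. Suc i < length xs \<longrightarrow> {xs ! i, xs ! Suc i} \<in> edges G" using p by (simp add: is_path_def)
  have ne: "xs \<noteq> []" using p by (simp add: is_path_def)
  have "{(xs @ [y]) ! i, (xs @ [y]) ! Suc i} \<in> edges G" if i: "Suc i < length (xs @ [y])" for i
  proof (cases "Suc i < length xs")
    case True then show ?thesis using e by (simp add: nth_append)
  next
    case False
    then have "Suc i = length xs" using i by simp
    then have "i = length xs - 1" by simp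
    then have "(xs @ [y]) ! i = last xs" "(xs @ [y]) ! Suc i = y" using ne \<open>Suc i = length xs\<close>
      by (simp_all add: nth_append last_conv_nth)
    then show ?thesis using ey by simp
  qed
  then show ?thesis using p y yv by (auto simp add: is_path_def)
qed

lemma card_set_path: "is_path G xs \<Longrightarrow> card (set xs) = length xs"
  by (simp add: is_path_def distinct_card)

lemma finite_paths: "is_graph G \<Longrightarrow> finite {xs. is_path G xs}"
proof -
  assume g: "is_graph G"
  have "{xs. is_path G xs} \<subseteq> {xs. set xs \<subseteq> verts G \<and> distinct xs}" by (auto simp: is_path_def)
  then show ?thesis using finite_subset_distinct[OF finite_verts[OF g]] finite_subset by blast
qed



lemma tree_graph: "is_tree G \<Longrightarrow> is_graph G"
  by (simp add: is_tree_def)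

lemma walk_unique:
  assumes dx: "distinct xs" and dy: "distinct ys"
    and x0: "xs ! 0 = ys ! 0" and x1: "xs ! 1 = ys ! 1"
    and ax: "\<forall>i. Suc i < length xs \<longrightarrow> xs ! i \<in> N (xs ! Suc i) \<and> xs ! Suc i \<in> N (xs ! i)"
    and ay: "\<forall>i. Suc i < length ys \<longrightarrow> ys ! i \<in> N (ys ! Suc i) \<and> ys ! Suc i \<in> N (ys ! i)"
    and cx: "\<forall>i. 1 \<le> i \<and> Suc i < length xs \<longrightarrow> card (N (xs ! i)) = 2"
  shows "\<forall>i. i < length xs \<and> i < length ys \<longrightarrow> xs ! i = ys ! i"
proof -
  have "\<forall>j\<le>i. xs ! j = ys ! j" if "i < length xs" "i < length ys" for i
    using that
  proof (induction i)
    case 0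
    then show ?case using x0 by simp
  next
    case (Suc i)
    then have IH: "\<forall>j\<le>i. xs ! j = ys ! j" by simp
    have "xs ! Suc i = ys ! Suc i"
    proof (cases i)
      case 0
      then show ?thesis using x1 by simp
    next
      case (Suc k)
      have ik: "i = Suc k" by fact
      let ?c = "xs ! i"
      have c: "card (N ?c) = 2" using cx Suc.prems ik by simp
      have p: "xs ! k \<in> N ?c" using ax Suc.prems ik by simp
      have a1: "xs ! Suc i \<in> N ?c" using ax Suc.prems by simp
      have a2: "ys ! Suc i \<in> N ?c" using ay Suc.prems IH by simp
      have n1: "xs ! Suc i \<noteq> xs ! k" using dx Suc.prems ik by (simp add: nth_eq_iff_index_eq)
      have n2: "ys ! Suc i \<noteq> ys ! k" using dy Suc.prems ik by (simp add: nth_eq_iff_index_eq)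
      have "ys ! k = xs ! k" using IH ik by simp
      then show ?thesis using card2_other[OF c p a1 a2 n1] n2 by simp
    qed
    then show ?case using IH le_Suc_eq by auto
  qed
  then show ?thesis by blast
qed

lemma max_walk:
  assumes t: "is_tree G" and W: "W \<subseteq> verts G"
    and e0: "{x0, x1} \<in> edges G" and w0: "x0 \<in> W" "x1 \<in> W"
  shows "\<exists>xs. is_path G xs \<and> set xs \<subseteq> W \<and> 2 \<le> length xs \<and> xs ! 0 = x0 \<and> xs ! 1 = x1 \<and>
     (\<forall>i. 1 \<le> i \<and> Suc i < length xs \<longrightarrow> P (xs ! i)) \<and>
     (P (last xs) \<longrightarrow> (\<forall>y\<in>W. {y, last xs} \<in> edges G \<longrightarrow> y = xs ! (length xs - 2)))"
proof -
  have g: "is_graph G" using t by (rule tree_graph)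
  define M where "M xs \<longleftrightarrow> is_path G xs \<and> set xs \<subseteq> W \<and> 2 \<le> length xs \<and> xs ! 0 = x0 \<and> xs ! 1 = x1 \<and>
     (\<forall>i. 1 \<le> i \<and> Suc i < length xs \<longrightarrow> P (xs ! i))" for xs
  have x01: "x0 \<noteq> x1" using edge_verts[OF g e0] by simp
  have "is_path G [x0, x1]"
    unfolding is_path_def using x01 w0 W e0 by (auto simp: less_Suc_eq)
  then have m0: "M [x0, x1]" unfolding M_def using w0 by auto
  have bd: "\<forall>ys. M ys \<longrightarrow> length ys < Suc (card (verts G))"
    using path_len[OF g] unfolding M_def by (simp add: less_Suc_eq_le)
  obtain xs where mx: "M xs" and mx2: "\<forall>ys. M ys \<longrightarrow> length ys \<le> length xs"
    using ex_has_greatest_nat[of M "[x0, x1]" length, OF m0 bd] by blast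
  have px: "is_path G xs" and sx: "set xs \<subseteq> W" and lx: "2 \<le> length xs" and inner: "\<forall>i. 1 \<le> i \<and> Suc i < length xs \<longrightarrow> P (xs ! i)"
    using mx unfolding M_def by auto
  have ne: "xs \<noteq> []" using lx by auto
  have lastc: "last xs = xs ! (length xs - 1)" using ne by (simp add: last_conv_nth)
  have "y = xs ! (length xs - 2)" if Pl: "P (last xs)" and yW: "y \<in> W" and ey: "{y, last xs} \<in> edges G" for y
  proof (rule ccontr)
    assume yne: "y \<noteq> xs ! (length xs - 2)"
    show False
    proof (cases "y \<in> set xs")
      case False
      let ?ys = "xs @ [y]"
      have "is_path G ?ys"
        using path_snoc[OF px False] ey yW W by (auto simp: insert_commute)
      moreover have "set ?ys \<subseteq> W" using sx yW by simp
      moreover have "?ys ! 0 = x0" "?ys ! 1 = x1" using mx lx unfolding M_def by (auto simp: nth_append)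
      moreover have "\<forall>i. 1 \<le> i \<and> Suc i < length ?ys \<longrightarrow> P (?ys ! i)"
      proof (intro allI impI)
        fix i assume i: "1 \<le> i \<and> Suc i < length ?ys"
        show "P (?ys ! i)"
        proof (cases "Suc i < length xs")
          case True then show ?thesis using inner i by (simp add: nth_append)
        next
          case False
          then have "i = length xs - 1" using i by simp arith
          then show ?thesis using Pl lastc ne by (simp add: nth_append)
        qed
      qed
      ultimately have "M ?ys" unfolding M_def using lx by simp
      then show False using mx2 by fastforce
    next
      case True
      then obtain j where j: "j < length xs" "xs ! j = y" by (auto simp: in_set_conv_nth)
      have "y \<noteq> last xs" using edge_verts[OF g ey] by simp
      then have j1: "j \<noteq> length xs - 1" using j lastc by auto
      have j2: "j \<noteq> length xs - 2" using j yne by auto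
      have j3: "j + 3 \<le> length xs" using j j1 j2 by linarith
      let ?zs = "drop j xs"
      have "is_path G ?zs" using path_drop[OF px j(1)] .
      moreover have "3 \<le> length ?zs" using j3 by simp
      moreover have "last ?zs = last xs" using j by simp
      moreover have "hd ?zs = y" using j by (simp add: hd_drop_conv_nth)
      ultimately have "is_cycle G ?zs" unfolding is_cycle_def using ey by (simp add: insert_commute)
      then show False using t unfolding is_tree_def by blast
    qed
  qed
  then show ?thesis using mx unfolding M_def by blast
qed

lemma closed_all:
  assumes t: "is_tree G" and x0: "x0 \<in> X" "x0 \<in> verts G"
    and cl: "\<forall>x\<in>X. \<forall>u. {u, x} \<in> edges G \<longrightarrow> u \<in> X"
  shows "verts G \<subseteq> X"
proof
  fix v assume v: "v \<in> verts G"
  obtain xs where p: "is_path G xs" and h: "hd xs = x0" and l: "last xs = v"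
    using t x0 v unfolding is_tree_def connected_graph_def by blast
  have ne: "xs \<noteq> []" using p by (simp add: is_path_def)
  have "i < length xs \<Longrightarrow> xs ! i \<in> X" for i
  proof (induction i)
    case 0 then show ?case using h ne x0 by (simp add: hd_conv_nth)
  next
    case (Suc i)
    then have "xs ! i \<in> X" by simp
    moreover have "{xs ! Suc i, xs ! i} \<in> edges G" using path_edge[OF p Suc.prems] by (simp add: insert_commute)
    ultimately show ?case using cl by blast
  qed
  moreover have "length xs - 1 < length xs" using ne by simp
  ultimately have "xs ! (length xs - 1) \<in> X" by blast
  then show "v \<in> X" using l ne by (simp add: last_conv_nth)
qed

lemma inc_card:
  assumes g: "is_graph G"
  shows "card {e \<in> edges G. v \<in> e} = deg G v"
proof -
  have inj: "inj_on (\<lambda>u. {u, v}) (nbrs G v)"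
  proof (rule inj_onI)
    fix u u' assume u: "u \<in> nbrs G v" "u' \<in> nbrs G v" and eq: "{u, v} = {u', v}"
    have "u \<noteq> v" using nbrs_not_self[OF g u(1)] .
    then show "u = u'" using eq by (auto simp: doubleton_eq_iff)
  qed
  have img: "(\<lambda>u. {u, v}) ` nbrs G v = {e \<in> edges G. v \<in> e}"
  proof
    show "(\<lambda>u. {u, v}) ` nbrs G v \<subseteq> {e \<in> edges G. v \<in> e}" by (auto simp: nbrs_def)
  next
    show "{e \<in> edges G. v \<in> e} \<subseteq> (\<lambda>u. {u, v}) ` nbrs G v"
    proof
      fix e assume e: "e \<in> {e \<in> edges G. v \<in> e}"
      have "\<forall>e\<in>edges G. \<exists>u v. u \<noteq> v \<and> e = {u, v} \<and> u \<in> verts G \<and> v \<in> verts G"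
        using g by (simp add: is_graph_def)
      then obtain a b where ab: "e = {a, b}" using e by blast
      show "e \<in> (\<lambda>u. {u, v}) ` nbrs G v"
      proof (cases "v = a")
        case True
        then have "e = {b, v}" using ab by (simp add: insert_commute)
        then show ?thesis using e by (auto simp: nbrs_def)
      next
        case False
        then have "v = b" using e ab by simp
        then have "e = {a, v}" using ab by simp
        then show ?thesis using e by (auto simp: nbrs_def)
      qed
    qed
  qed
  show ?thesis using card_image[OF inj] img by (simp add: deg_nbrs)
qed

lemma finite_edges:
  assumes g: "is_graph G" shows "finite (edges G)"
proof -
  have "edges G \<subseteq> Pow (verts G)"
  proof
    fix e assume e: "e \<in> edges G"
    have "\<forall>e\<in>edges G. \<exists>u v. u \<noteq> v \<and> e = {u, v} \<and> u \<in> verts G \<and> v \<in> verts G"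
      using g by (simp add: is_graph_def)
    then obtain a b where "e = {a, b}" "a \<in> verts G" "b \<in> verts G" using e by blast
    then show "e \<in> Pow (verts G)" by simp
  qed
  then show ?thesis using finite_verts[OF g] by (meson finite_Pow_iff finite_subset)
qed

lemma handshake:
  assumes g: "is_graph G"
  shows "(\<Sum>v\<in>verts G. deg G v) = 2 * card (edges G)"
proof -
  have fE: "finite (edges G)" using finite_edges[OF g] .
  have fV: "finite (verts G)" using finite_verts[OF g] .
  have c1: "card {e \<in> edges G. v \<in> e} = (\<Sum>e\<in>edges G. if v \<in> e then 1 else 0)" for v
  proof -
    have "card {e \<in> edges G. v \<in> e} = sum (\<lambda>_. 1) {e \<in> edges G. v \<in> e}" by (rule card_eq_sum)
    also have "\<dots> = (\<Sum>e\<in>edges G. if v \<in> e then 1 else 0)" by (rule sum.inter_filter[OF fE])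
    finally show ?thesis .
  qed
  have c2: "card {v \<in> verts G. v \<in> e} = (\<Sum>v\<in>verts G. if v \<in> e then 1 else 0)" for e
  proof -
    have "card {v \<in> verts G. v \<in> e} = sum (\<lambda>_. 1) {v \<in> verts G. v \<in> e}" by (rule card_eq_sum)
    also have "\<dots> = (\<Sum>v\<in>verts G. if v \<in> e then 1 else 0)" by (rule sum.inter_filter[OF fV])
    finally show ?thesis .
  qed
  have "(\<Sum>v\<in>verts G. deg G v) = (\<Sum>v\<in>verts G. card {e \<in> edges G. v \<in> e})"
    using inc_card[OF g] by simp
  also have "\<dots> = (\<Sum>v\<in>verts G. \<Sum>e\<in>edges G. if v \<in> e then 1 else 0)"
    using c1 by simp
  also have "\<dots> = (\<Sum>e\<in>edges G. \<Sum>v\<in>verts G. if v \<in> e then 1 else 0)"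
    by (rule sum.swap)
  also have "\<dots> = (\<Sum>e\<in>edges G. card {v \<in> verts G. v \<in> e})"
    using c2 by simp
  also have "\<dots> = (\<Sum>e\<in>edges G. 2)"
  proof (rule sum.cong)
    fix e assume e: "e \<in> edges G"
    have "\<forall>e\<in>edges G. \<exists>u v. u \<noteq> v \<and> e = {u, v} \<and> u \<in> verts G \<and> v \<in> verts G"
      using g by (simp add: is_graph_def)
    then obtain a b where ab: "a \<noteq> b" "e = {a, b}" "a \<in> verts G" "b \<in> verts G" using e by blast
    then have "{v \<in> verts G. v \<in> e} = {a, b}" by auto
    then show "card {v \<in> verts G. v \<in> e} = 2" using ab by simp
  qed simp
  finally show ?thesis by simp
qed



lemma two_verts:
  assumes "finite V" "2 \<le> card V"
  shows "\<exists>u v. u \<in> V \<and> v \<in> V \<and> u \<noteq> v"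
proof -
  have "V \<noteq> {}" using assms by auto
  then obtain u where u: "u \<in> V" by blast
  have c1: "card (V - {u}) \<ge> 1" using assms u by simp
  have "V - {u} \<noteq> {}"
  proof
    assume e: "V - {u} = {}"
    have "card (V - {u}) = card ({}::'a set)" by (simp only: e)
    then have "card (V - {u}) = 0" by (simp only: card.empty)
    then show False using c1 by simp
  qed
  then obtain v where "v \<in> V - {u}" by blast
  then show ?thesis using u by blast
qed

lemma leaf_exists:
  assumes t: "is_tree G" and c: "2 \<le> card (verts G)"
  shows "\<exists>l\<in>verts G. deg G l = 1"
proof -
  have g: "is_graph G" using t by (rule tree_graph)
  obtain u v where uv: "u \<in> verts G" "v \<in> verts G" "u \<noteq> v"
    using two_verts[OF finite_verts[OF g] c] by blast
  obtain xs where p: "is_path G xs" and h: "hd xs = u" and l: "last xs = v"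
    using t uv unfolding is_tree_def connected_graph_def by blast
  have ne: "xs \<noteq> []" using p by (simp add: is_path_def)
  have "length xs \<noteq> 1"
  proof
    assume "length xs = 1"
    then have "hd xs = last xs" using ne by (simp add: hd_conv_nth last_conv_nth)
    then show False using h l uv by simp
  qed
  moreover have "0 < length xs" using ne by simp
  ultimately have "Suc 0 < length xs" by linarith
  then have e: "{xs ! 0, xs ! 1} \<in> edges G" using path_edge[OF p, of 0] by simp
  have w: "xs ! 0 \<in> verts G" "xs ! 1 \<in> verts G" using edge_verts[OF g e] by auto
  obtain ys where ys: "is_path G ys" "2 \<le> length ys"
    and lst: "\<forall>y\<in>verts G. {y, last ys} \<in> edges G \<longrightarrow> y = ys ! (length ys - 2)"
    using max_walk[OF t order_refl e w, of "\<lambda>_. True"] by auto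
  let ?l = "last ys"
  let ?p = "ys ! (length ys - 2)"
  have "ys \<noteq> []" using ys by auto
  moreover have "Suc (length ys - 2) = length ys - 1" using ys by simp
  ultimately have lc: "?l = ys ! Suc (length ys - 2)" by (simp add: last_conv_nth)
  have "Suc (length ys - 2) < length ys" using ys by simp
  then have pn: "?p \<in> nbrs G ?l" using path_nbr1[OF ys(1)] lc by simp
  have "nbrs G ?l = {?p}"
  proof
    show "nbrs G ?l \<subseteq> {?p}"
    proof
      fix y assume y: "y \<in> nbrs G ?l"
      then have "y \<in> verts G" using nbrs_sub[OF g] by blast
      moreover have "{y, ?l} \<in> edges G" using y by (simp add: nbrs_def)
      ultimately show "y \<in> {?p}" using lst by simp
    qed
  qed (use pn in simp)
  then have "deg G ?l = 1" by (simp add: deg_nbrs)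
  moreover have "?l \<in> verts G" using ys(1) unfolding is_path_def by auto
  ultimately show ?thesis by blast
qed

definition del_vert :: "'a graph \<Rightarrow> 'a \<Rightarrow> 'a graph" where
  "del_vert G l = (verts G - {l}, {e \<in> edges G. l \<notin> e})"

lemma del_verts[simp]: "verts (del_vert G l) = verts G - {l}"
  by (simp add: del_vert_def verts_def)

lemma del_edges[simp]: "edges (del_vert G l) = {e \<in> edges G. l \<notin> e}"
  by (simp add: del_vert_def edges_def)

lemma del_leaf_tree:
  assumes t: "is_tree G" and lv: "l \<in> verts G" and d: "deg G l = 1" and c: "2 \<le> card (verts G)"
  shows "is_tree (del_vert G l)"
proof -
  have g: "is_graph G" using t by (rule tree_graph)
  have fin: "finite (verts G)" using finite_verts[OF g] .
  have ig: "is_graph (del_vert G l)"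
    unfolding is_graph_def
  proof (intro conjI ballI)
    show "finite (verts (del_vert G l))" using fin by simp
  next
    fix e assume e: "e \<in> edges (del_vert G l)"
    then have eE: "e \<in> edges G" and le: "l \<notin> e" by auto
    have "\<forall>e\<in>edges G. \<exists>u v. u \<noteq> v \<and> e = {u, v} \<and> u \<in> verts G \<and> v \<in> verts G"
      using g by (simp add: is_graph_def)
    then obtain a b where ab: "a \<noteq> b" "e = {a, b}" "a \<in> verts G" "b \<in> verts G" using eE by blast
    then have "a \<noteq> l" "b \<noteq> l" using le by auto
    then show "\<exists>u v. u \<noteq> v \<and> e = {u, v} \<and> u \<in> verts (del_vert G l) \<and> v \<in> verts (del_vert G l)"
      using ab by auto
  qed
  have ne: "verts (del_vert G l) \<noteq> {}"
  proof -
    obtain u v where "u \<in> verts G" "v \<in> verts G" "u \<noteq> v" using two_verts[OF fin c] by blast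
    then show ?thesis by auto
  qed
  have conn: "connected_graph (del_vert G l)"
    unfolding connected_graph_def
  proof (intro ballI)
    fix u v assume u: "u \<in> verts (del_vert G l)" and v: "v \<in> verts (del_vert G l)"
    then have u': "u \<in> verts G" "u \<noteq> l" and v': "v \<in> verts G" "v \<noteq> l" by auto
    obtain xs where p: "is_path G xs" and h: "hd xs = u" and la: "last xs = v"
      using t u' v' unfolding is_tree_def connected_graph_def by blast
    have xne: "xs \<noteq> []" using p by (simp add: is_path_def)
    have nl: "l \<notin> set xs"
    proof
      assume "l \<in> set xs"
      then obtain i where i: "i < length xs" "xs ! i = l" by (auto simp: in_set_conv_nth)
      have "i \<noteq> 0"
      proof
        assume "i = 0"
        then have "xs ! i = u" using h xne by (simp add: hd_conv_nth)
        then show False using i u' by simp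
      qed
      moreover have "i \<noteq> length xs - 1" using i la v' xne by (auto simp: last_conv_nth)
      ultimately obtain k where k: "i = Suc k" "Suc i < length xs" using i by (cases i) auto
      have a1: "xs ! k \<in> nbrs G l" using path_nbr1[OF p, of k] k i by simp
      have a2: "xs ! Suc i \<in> nbrs G l" using path_nbr2[OF p, of i] k i by simp
      have "xs ! k \<noteq> xs ! Suc i" using p k unfolding is_path_def by (simp add: nth_eq_iff_index_eq)
      then show False using card1_unique[OF _ a1 a2] d by (simp add: deg_nbrs)
    qed
    have "is_path (del_vert G l) xs"
      unfolding is_path_def
    proof (intro conjI allI impI)
      show "xs \<noteq> []" using xne .
      show "distinct xs" using p by (simp add: is_path_def)
      show "set xs \<subseteq> verts (del_vert G l)" using p nl by (auto simp: is_path_def)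
    next
      fix i assume i: "Suc i < length xs"
      have "{xs ! i, xs ! Suc i} \<in> edges G" using path_edge[OF p i] .
      moreover have "xs ! i \<noteq> l" "xs ! Suc i \<noteq> l" using nl i by (auto dest: nth_mem)
      ultimately show "{xs ! i, xs ! Suc i} \<in> edges (del_vert G l)" by simp
    qed
    then show "\<exists>xs. is_path (del_vert G l) xs \<and> hd xs = u \<and> last xs = v" using h la by blast
  qed
  have nc: "\<nexists>xs. is_cycle (del_vert G l) xs"
  proof
    assume "\<exists>xs. is_cycle (del_vert G l) xs"
    then obtain xs where cy: "is_cycle (del_vert G l) xs" by blast
    have "is_path G xs" using cy unfolding is_cycle_def is_path_def by auto
    then have "is_cycle G xs" using cy unfolding is_cycle_def by auto
    then show False using t unfolding is_tree_def by blast
  qed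
  show ?thesis unfolding is_tree_def using ig ne conn nc by blast
qed

lemma tree_edges:
  assumes "is_tree G"
  shows "card (edges G) + 1 = card (verts G)"
  using assms
proof (induction "card (verts G)" arbitrary: G rule: less_induct)
  case less
  have t: "is_tree G" by fact
  have g: "is_graph G" using t by (rule tree_graph)
  have fin: "finite (verts G)" using finite_verts[OF g] .
  have vne: "verts G \<noteq> {}" using t by (simp add: is_tree_def)
  show ?case
  proof (cases "card (verts G) \<le> 1")
    case True
    then have "card (verts G) = 1" using vne fin by (simp add: card_gt_0_iff le_Suc_eq)
    then obtain x where x: "verts G = {x}" by (rule card_1_singletonE)
    have "edges G = {}"
    proof (rule ccontr)
      assume "edges G \<noteq> {}"
      then obtain e where e: "e \<in> edges G" by blast
      have "\<forall>e\<in>edges G. \<exists>u v. u \<noteq> v \<and> e = {u, v} \<and> u \<in> verts G \<and> v \<in> verts G"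
        using g by (simp add: is_graph_def)
      then obtain a b where "a \<noteq> b" "a \<in> verts G" "b \<in> verts G" using e by blast
      then show False using x by simp
    qed
    then show ?thesis using x by simp
  next
    case False
    then have c: "2 \<le> card (verts G)" by simp
    obtain l where lv: "l \<in> verts G" and d: "deg G l = 1" using leaf_exists[OF t c] by blast
    let ?G' = "del_vert G l"
    have t': "is_tree ?G'" using del_leaf_tree[OF t lv d c] .
    have cv: "card (verts ?G') = card (verts G) - 1" using lv fin by simp
    then have "card (verts ?G') < card (verts G)" using c by simp
    then have IH: "card (edges ?G') + 1 = card (verts ?G')" using less.hyps t' by blast
    have fE: "finite (edges G)" using finite_edges[OF g] .
    have split: "edges G = edges ?G' \<union> {e \<in> edges G. l \<in> e}" by auto
    have disj: "edges ?G' \<inter> {e \<in> edges G. l \<in> e} = {}" by auto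
    have "card (edges G) = card (edges ?G') + card {e \<in> edges G. l \<in> e}"
      using card_Un_disjoint[of "edges ?G'" "{e \<in> edges G. l \<in> e}"] fE disj split by simp
    also have "card {e \<in> edges G. l \<in> e} = 1" using inc_card[OF g] d by simp
    finally show ?thesis using IH cv c by simp
  qed
qed



definition core :: "'a graph \<Rightarrow> 'a \<Rightarrow> bool" where
  "core G v \<longleftrightarrow> v \<in> verts G \<and> \<not> (\<exists>a s r j. ray G a s r \<and> 1 \<le> j \<and> j \<le> a \<and> r ! j = v)"

definition cnbrs :: "'a graph \<Rightarrow> 'a \<Rightarrow> 'a set" where
  "cnbrs G v = {u \<in> nbrs G v. core G u}"

definition rays :: "'a graph \<Rightarrow> 'a \<Rightarrow> 'a list set" where
  "rays G s = {r. \<exists>a. ray G a s r}"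

lemma ray_path: "ray G a s r \<Longrightarrow> is_path G r"
  by (simp add: ray_def two_path_def)
lemma ray_len: "ray G a s r \<Longrightarrow> length r = Suc a"
  by (simp add: ray_def two_path_def)
lemma ray_pos: "ray G a s r \<Longrightarrow> 1 \<le> a"
  by (simp add: ray_def two_path_def)
lemma ray_0: "ray G a s r \<Longrightarrow> r ! 0 = s"
  by (simp add: ray_def)
lemma ray_src: "ray G a s r \<Longrightarrow> deg G s > 2"
  by (simp add: ray_def)
lemma ray_end: "ray G a s r \<Longrightarrow> deg G (r ! a) = 1"
  by (simp add: ray_def)
lemma ray_inner: "ray G a s r \<Longrightarrow> 1 \<le> i \<Longrightarrow> i < a \<Longrightarrow> deg G (r ! i) = 2"
  by (simp add: ray_def two_path_def)

lemma ray_deg_le2: "ray G a s r \<Longrightarrow> 1 \<le> j \<Longrightarrow> j \<le> a \<Longrightarrow> deg G (r ! j) \<le> 2"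
proof -
  assume r: "ray G a s r" and j: "1 \<le> j" "j \<le> a"
  show ?thesis
  proof (cases "j < a")
    case True then show ?thesis using ray_inner[OF r j(1)] by simp
  next
    case False then have "j = a" using j by simp
    then show ?thesis using ray_end[OF r] by simp
  qed
qed

lemma deg_gt2_core: "v \<in> verts G \<Longrightarrow> deg G v > 2 \<Longrightarrow> core G v"
proof -
  assume v: "v \<in> verts G" and d: "deg G v > 2"
  have "\<not> (\<exists>a s r j. ray G a s r \<and> 1 \<le> j \<and> j \<le> a \<and> r ! j = v)"
  proof
    assume "\<exists>a s r j. ray G a s r \<and> 1 \<le> j \<and> j \<le> a \<and> r ! j = v"
    then obtain a s r j where r: "ray G a s r" "1 \<le> j" "j \<le> a" "r ! j = v" by blast
    then show False using ray_deg_le2[OF r(1-3)] d by simp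
  qed
  then show ?thesis using v by (simp add: core_def)
qed

lemma ray_noncore: "ray G a s r \<Longrightarrow> 1 \<le> j \<Longrightarrow> j \<le> a \<Longrightarrow> \<not> core G (r ! j)"
proof
  assume r: "ray G a s r" "1 \<le> j" "j \<le> a" and c: "core G (r ! j)"
  have "\<not> (\<exists>a' s' r' j'. ray G a' s' r' \<and> 1 \<le> j' \<and> j' \<le> a' \<and> r' ! j' = r ! j)"
    using c by (simp add: core_def)
  moreover have "\<exists>a' s' r' j'. ray G a' s' r' \<and> 1 \<le> j' \<and> j' \<le> a' \<and> r' ! j' = r ! j"
    using r by blast
  ultimately show False by blast
qed

lemma ray_set: "ray G a s r \<Longrightarrow> set r \<subseteq> verts G"
  by (drule ray_path) (simp add: is_path_def)

lemma ray_s_vert: "ray G a s r \<Longrightarrow> s \<in> verts G"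
proof -
  assume r: "ray G a s r"
  have "r ! 0 \<in> set r" using ray_len[OF r] by simp
  then show ?thesis using ray_set[OF r] ray_0[OF r] by auto
qed

lemma ray_nbr:
  assumes g: "is_graph G" and r: "ray G a s r" and j: "1 \<le> j" "j \<le> a" and y: "y \<in> nbrs G (r ! j)"
  shows "y = r ! (j - 1) \<or> (j < a \<and> y = r ! Suc j)"
proof -
  have p: "is_path G r" using ray_path[OF r] .
  have l: "length r = Suc a" using ray_len[OF r] .
  have jj: "Suc (j - 1) = j" using j by simp
  have pn: "r ! (j - 1) \<in> nbrs G (r ! j)" using path_nbr1[OF p, of "j - 1"] jj l j by simp
  show ?thesis
  proof (cases "j < a")
    case True
    have d2: "card (nbrs G (r ! j)) = 2" using ray_inner[OF r j(1) True] by (simp add: deg_nbrs)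
    have qn: "r ! Suc j \<in> nbrs G (r ! j)" using path_nbr2[OF p, of j] True l by simp
    have "r ! (j - 1) \<noteq> r ! Suc j" using p l True unfolding is_path_def by (simp add: nth_eq_iff_index_eq)
    then have "y = r ! (j - 1) \<or> y = r ! Suc j" using card2_cases[OF d2 pn qn _ y] by simp
    then show ?thesis using True by blast
  next
    case False
    then have "j = a" using j by simp
    then have d1: "card (nbrs G (r ! j)) = 1" using ray_end[OF r] by (simp add: deg_nbrs)
    then show ?thesis using card1_unique[OF d1 y pn] by simp
  qed
qed

lemma noncore_nbr:
  assumes g: "is_graph G" and x: "core G x" and y: "y \<in> nbrs G x" and ny: "\<not> core G y"
  shows "\<exists>a r. ray G a x r \<and> r ! 1 = y"
proof -
  have yv: "y \<in> verts G" using nbrs_sub[OF g] y by blast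
  then obtain a s r j where r: "ray G a s r" and j: "1 \<le> j" "j \<le> a" and rj: "r ! j = y"
    using ny unfolding core_def by blast
  have xn: "x \<in> nbrs G (r ! j)" using y rj nbrs_sym by metis
  have c: "x = r ! (j - 1) \<or> (j < a \<and> x = r ! Suc j)" using ray_nbr[OF g r j xn] .
  have "\<not> (j < a \<and> x = r ! Suc j)"
  proof
    assume "j < a \<and> x = r ! Suc j"
    then have "\<not> core G x" using ray_noncore[OF r, of "Suc j"] by simp
    then show False using x by simp
  qed
  then have x1: "x = r ! (j - 1)" using c by blast
  have "j = 1"
  proof (rule ccontr)
    assume "j \<noteq> 1"
    then have "1 \<le> j - 1" "j - 1 \<le> a" using j by auto
    then have "\<not> core G (r ! (j - 1))" using ray_noncore[OF r] by blast
    then show False using x x1 by simp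
  qed
  then have "x = s" using x1 ray_0[OF r] by simp
  then show ?thesis using r rj \<open>j = 1\<close> by blast
qed

lemma two_path_unique:
  assumes x: "two_path G a xs" and y: "two_path G b ys"
    and e0: "xs ! 0 = ys ! 0" and e1: "xs ! 1 = ys ! 1"
  shows "xs = ys"
proof -
  have px: "is_path G xs" and lx: "length xs = Suc a" and ax: "1 \<le> a"
    and ix: "\<forall>i. 1 \<le> i \<and> i < a \<longrightarrow> deg G (xs ! i) = 2" and ex: "deg G (xs ! a) \<noteq> 2"
    using x by (auto simp: two_path_def)
  have py: "is_path G ys" and ly: "length ys = Suc b" and ay: "1 \<le> b"
    and iy: "\<forall>i. 1 \<le> i \<and> i < b \<longrightarrow> deg G (ys ! i) = 2" and ey: "deg G (ys ! b) \<noteq> 2"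
    using y by (auto simp: two_path_def)
  have eq: "\<forall>i. i < length xs \<and> i < length ys \<longrightarrow> xs ! i = ys ! i"
  proof (rule walk_unique[where N = "nbrs G"])
    show "distinct xs" using px by (simp add: is_path_def)
    show "distinct ys" using py by (simp add: is_path_def)
    show "xs ! 0 = ys ! 0" by fact
    show "xs ! 1 = ys ! 1" by fact
    show "\<forall>i. Suc i < length xs \<longrightarrow> xs ! i \<in> nbrs G (xs ! Suc i) \<and> xs ! Suc i \<in> nbrs G (xs ! i)"
      using path_nbr1[OF px] path_nbr2[OF px] by blast
    show "\<forall>i. Suc i < length ys \<longrightarrow> ys ! i \<in> nbrs G (ys ! Suc i) \<and> ys ! Suc i \<in> nbrs G (ys ! i)"
      using path_nbr1[OF py] path_nbr2[OF py] by blast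
    show "\<forall>i. 1 \<le> i \<and> Suc i < length xs \<longrightarrow> card (nbrs G (xs ! i)) = 2"
      using ix lx by (simp add: deg_nbrs)
  qed
  have "a = b"
  proof (rule ccontr)
    assume "a \<noteq> b"
    then have "a < b \<or> b < a" by arith
    then show False
    proof
      assume ab: "a < b"
      then have "xs ! a = ys ! a" using eq lx ly by simp
      moreover have "deg G (ys ! a) = 2" using iy ab ax by simp
      ultimately show False using ex by simp
    next
      assume ab: "b < a"
      then have "xs ! b = ys ! b" using eq lx ly by simp
      moreover have "deg G (xs ! b) = 2" using ix ab ay by simp
      ultimately show False using ey by simp
    qed
  qed
  then show ?thesis using eq lx ly by (intro nth_equalityI) auto
qed

lemma two_path_rev:
  assumes x: "two_path G a xs"
  shows "two_path G a (rev xs)"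
proof -
  have px: "is_path G xs" and lx: "length xs = Suc a" and ax: "1 \<le> a"
    and ix: "\<forall>i. 1 \<le> i \<and> i < a \<longrightarrow> deg G (xs ! i) = 2" and e0: "deg G (xs ! 0) \<noteq> 2" and ex: "deg G (xs ! a) \<noteq> 2"
    using x by (auto simp: two_path_def)
  have "rev xs ! 0 = xs ! a" using lx by (simp add: rev_nth)
  moreover have "rev xs ! a = xs ! 0" using lx by (simp add: rev_nth)
  moreover have "\<forall>i. 1 \<le> i \<and> i < a \<longrightarrow> deg G (rev xs ! i) = 2"
  proof (intro allI impI)
    fix i assume i: "1 \<le> i \<and> i < a"
    have "rev xs ! i = xs ! (a - i)" using lx i by (simp add: rev_nth)
    moreover have "1 \<le> a - i" "a - i < a" using i by auto
    ultimately show "deg G (rev xs ! i) = 2" using ix by simp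
  qed
  ultimately show ?thesis using path_rev[OF px] lx ax e0 ex by (simp add: two_path_def)
qed

lemma ray_two_path: "ray G a s r \<Longrightarrow> two_path G a r"
  by (simp add: ray_def)

lemma ray_unique1:
  assumes r: "ray G a s r" and r': "ray G b s r'" and e: "r ! 1 = r' ! 1"
  shows "r = r'"
  using two_path_unique[OF ray_two_path[OF r] ray_two_path[OF r']] ray_0[OF r] ray_0[OF r'] e by simp

lemma ray_last: "ray G a s r \<Longrightarrow> last r = r ! a"
proof -
  assume r: "ray G a s r"
  have l: "length r = Suc a" using ray_len[OF r] .
  then have "r \<noteq> []" by auto
  then show ?thesis using l by (simp add: last_conv_nth)
qed

lemma ray_unique_last:
  assumes g: "is_graph G" and r: "ray G a s r" and r': "ray G b s' r'" and e: "last r = last r'"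
  shows "r = r'"
proof -
  have t1: "two_path G a (rev r)" using two_path_rev[OF ray_two_path[OF r]] .
  have t2: "two_path G b (rev r')" using two_path_rev[OF ray_two_path[OF r']] .
  have l1: "length r = Suc a" using ray_len[OF r] .
  have l2: "length r' = Suc b" using ray_len[OF r'] .
  have a1: "1 \<le> a" using ray_pos[OF r] .
  have b1: "1 \<le> b" using ray_pos[OF r'] .
  have z1: "rev r ! 0 = r ! a" using l1 by (simp add: rev_nth)
  have z2: "rev r' ! 0 = r' ! b" using l2 by (simp add: rev_nth)
  have la: "r ! a = r' ! b" using e ray_last[OF r] ray_last[OF r'] by simp
  have o1: "rev r ! 1 = r ! (a - 1)" using l1 a1 by (simp add: rev_nth)
  have o2: "rev r' ! 1 = r' ! (b - 1)" using l2 b1 by (simp add: rev_nth)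
  have n1: "r ! (a - 1) \<in> nbrs G (r ! a)"
    using path_nbr1[OF ray_path[OF r], of "a - 1"] l1 a1 by simp
  have n2: "r' ! (b - 1) \<in> nbrs G (r' ! b)"
    using path_nbr1[OF ray_path[OF r'], of "b - 1"] l2 b1 by simp
  have d: "card (nbrs G (r ! a)) = 1" using ray_end[OF r] by (simp add: deg_nbrs)
  have "r ! (a - 1) = r' ! (b - 1)" using card1_unique[OF d n1] n2 la by simp
  then have "rev r = rev r'" using two_path_unique[OF t1 t2] z1 z2 la o1 o2 by simp
  then show ?thesis by simp
qed

lemma finite_rays: "is_graph G \<Longrightarrow> finite (rays G s)"
proof -
  assume g: "is_graph G"
  have "rays G s \<subseteq> {xs. is_path G xs}" unfolding rays_def by (auto dest: ray_path)
  then show ?thesis using finite_paths[OF g] finite_subset by blast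
qed

lemma degL_rays: "degL G s = card (rays G s)"
  by (simp add: degL_def rays_def)

lemma deg_split:
  assumes g: "is_graph G" and x: "core G x"
  shows "deg G x = card (cnbrs G x) + card (rays G x)"
proof -
  have fr: "finite (rays G x)" using finite_rays[OF g] .
  have inj: "inj_on (\<lambda>r. r ! 1) (rays G x)"
  proof (rule inj_onI)
    fix r r' assume r: "r \<in> rays G x" and r': "r' \<in> rays G x" and e: "r ! 1 = r' ! 1"
    obtain a where a: "ray G a x r" using r unfolding rays_def by blast
    obtain b where b: "ray G b x r'" using r' unfolding rays_def by blast
    show "r = r'" using ray_unique1[OF a b e] .
  qed
  have eq: "nbrs G x = cnbrs G x \<union> (\<lambda>r. r ! 1) ` rays G x"
  proof
    show "nbrs G x \<subseteq> cnbrs G x \<union> (\<lambda>r. r ! 1) ` rays G x"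
    proof
      fix y assume y: "y \<in> nbrs G x"
      show "y \<in> cnbrs G x \<union> (\<lambda>r. r ! 1) ` rays G x"
      proof (cases "core G y")
        case True then show ?thesis using y by (simp add: cnbrs_def)
      next
        case False
        then obtain a r where "ray G a x r" "r ! 1 = y" using noncore_nbr[OF g x y] by blast
        then show ?thesis unfolding rays_def by blast
      qed
    qed
  next
    show "cnbrs G x \<union> (\<lambda>r. r ! 1) ` rays G x \<subseteq> nbrs G x"
    proof
      fix y assume "y \<in> cnbrs G x \<union> (\<lambda>r. r ! 1) ` rays G x"
      then show "y \<in> nbrs G x"
      proof
        assume "y \<in> cnbrs G x" then show ?thesis by (simp add: cnbrs_def)
      next
        assume "y \<in> (\<lambda>r. r ! 1) ` rays G x"
        then obtain r a where r: "ray G a x r" and yr: "y = r ! 1" unfolding rays_def by blast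
        have "r ! 1 \<in> nbrs G (r ! 0)" using path_nbr2[OF ray_path[OF r], of 0] ray_len[OF r] ray_pos[OF r] by simp
        then show ?thesis using yr ray_0[OF r] by simp
      qed
    qed
  qed
  have disj: "cnbrs G x \<inter> (\<lambda>r. r ! 1) ` rays G x = {}"
  proof -
    have "\<not> core G (r ! 1)" if rr: "r \<in> rays G x" for r
    proof -
      obtain a where a: "ray G a x r" using rr unfolding rays_def by blast
      show ?thesis using ray_noncore[OF a order_refl ray_pos[OF a]] .
    qed
    then show ?thesis by (auto simp: cnbrs_def)
  qed
  have fc: "finite (cnbrs G x)" using finite_nbrs[OF g, of x] by (simp add: cnbrs_def)
  have "deg G x = card (cnbrs G x \<union> (\<lambda>r. r ! 1) ` rays G x)" using eq by (simp add: deg_nbrs)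
  also have "\<dots> = card (cnbrs G x) + card ((\<lambda>r. r ! 1) ` rays G x)"
    using card_Un_disjoint[OF fc _ disj] fr by simp
  also have "card ((\<lambda>r. r ! 1) ` rays G x) = card (rays G x)" using card_image[OF inj] .
  finally show ?thesis .
qed



lemma half_indep:
  fixes adj :: "'a \<Rightarrow> 'a \<Rightarrow> bool"
  assumes "finite Q"
    and one: "\<forall>s\<in>Q. \<forall>t\<in>Q. \<forall>t'\<in>Q. adj s t \<and> adj s t' \<longrightarrow> t = t'"
    and sym: "\<forall>s t. adj s t \<longrightarrow> adj t s"
  shows "\<exists>I\<subseteq>Q. (\<forall>u\<in>I. \<forall>v\<in>I. u \<noteq> v \<longrightarrow> \<not> adj u v) \<and> card Q \<le> 2 * card I"
  using assms(1) one
proof (induction "card Q" arbitrary: Q rule: less_induct)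
  case less
  show ?case
  proof (cases "Q = {}")
    case True
    then show ?thesis by auto
  next
    case False
    then obtain s where s: "s \<in> Q" by blast
    define N where "N = {t \<in> Q. adj s t}"
    have fN: "finite N" using less.prems(1) unfolding N_def by simp
    have allN: "\<forall>t\<in>N. \<forall>t'\<in>N. t = t'"
    proof (intro ballI)
      fix t t' assume t: "t \<in> N" and t': "t' \<in> N"
      then have "t \<in> Q" "t' \<in> Q" "adj s t" "adj s t'" unfolding N_def by auto
      then show "t = t'" using less.prems(2) s by blast
    qed
    have cN: "card N \<le> 1" using card_le_Suc0_iff_eq[OF fN] allN by simp
    define Q' where "Q' = Q - {s} - N"
    have fQ': "finite Q'" using less.prems(1) unfolding Q'_def by simp
    have sub: "Q \<subseteq> Q' \<union> {s} \<union> N" unfolding Q'_def by auto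
    have "card Q \<le> card (Q' \<union> {s} \<union> N)" using card_mono[OF _ sub] fQ' fN by simp
    also have "\<dots> \<le> card (Q' \<union> {s}) + card N" by (rule card_Un_le)
    also have "card (Q' \<union> {s}) \<le> card Q' + card {s}" by (rule card_Un_le)
    finally have cQ: "card Q \<le> card Q' + 2" using cN by simp
    have lt: "card Q' < card Q"
    proof -
      have "Q' \<subseteq> Q" unfolding Q'_def by auto
      moreover have "s \<notin> Q'" unfolding Q'_def by auto
      ultimately have "Q' \<subset> Q" using s by auto
      then show ?thesis using less.prems(1) by (simp add: psubset_card_mono)
    qed
    have one': "\<forall>s\<in>Q'. \<forall>t\<in>Q'. \<forall>t'\<in>Q'. adj s t \<and> adj s t' \<longrightarrow> t = t'"
    proof (intro ballI impI)
      fix x t t' assume "x \<in> Q'" "t \<in> Q'" "t' \<in> Q'" "adj x t \<and> adj x t'"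
      moreover have "Q' \<subseteq> Q" unfolding Q'_def by auto
      ultimately show "t = t'" using less.prems(2) by blast
    qed
    have "\<exists>I\<subseteq>Q'. (\<forall>u\<in>I. \<forall>v\<in>I. u \<noteq> v \<longrightarrow> \<not> adj u v) \<and> card Q' \<le> 2 * card I"
      by (rule less.hyps[OF lt fQ' one'])
    then obtain I' where I': "I' \<subseteq> Q'" "\<forall>u\<in>I'. \<forall>v\<in>I'. u \<noteq> v \<longrightarrow> \<not> adj u v" "card Q' \<le> 2 * card I'"
      by blast
    have sI': "s \<notin> I'" using I'(1) unfolding Q'_def by auto
    have nadj: "\<not> adj s v" if v: "v \<in> I'" for v
    proof
      assume "adj s v"
      moreover have "v \<in> Q" using v I'(1) unfolding Q'_def by auto
      ultimately have "v \<in> N" unfolding N_def by simp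
      then show False using v I'(1) unfolding Q'_def by auto
    qed
    let ?I = "insert s I'"
    have "?I \<subseteq> Q" using I'(1) s unfolding Q'_def by auto
    moreover have "\<forall>u\<in>?I. \<forall>v\<in>?I. u \<noteq> v \<longrightarrow> \<not> adj u v"
    proof (intro ballI impI)
      fix u v assume u: "u \<in> ?I" and v: "v \<in> ?I" and uv: "u \<noteq> v"
      show "\<not> adj u v"
      proof (cases "u = s")
        case True
        then have "v \<in> I'" using v uv by auto
        then show ?thesis using nadj True by simp
      next
        case False
        then have u': "u \<in> I'" using u by auto
        show ?thesis
        proof (cases "v = s")
          case True
          then show ?thesis using nadj[OF u'] sym by blast
        next
          case False
          then have "v \<in> I'" using v by auto
          then show ?thesis using I'(2) u' uv by blast
        qed
      qed
    qed
    moreover have "card ?I = card I' + 1" using sI' finite_subset[OF I'(1) fQ'] by simp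
    then have "card Q \<le> 2 * card ?I" using cQ I'(3) by simp
    ultimately show ?thesis by blast
  qed
qed

lemma fork_ge:
  assumes g: "is_graph G" and I: "independent G I" and f: "\<forall>s\<in>I. is_fork G a b s"
  shows "card I \<le> fork_number G a b"
proof -
  let ?X = "{card I | I. independent G I \<and> (\<forall>s\<in>I. is_fork G a b s)}"
  have "?X \<subseteq> {..card (verts G)}"
  proof
    fix k assume "k \<in> ?X"
    then obtain J where "k = card J" "independent G J" by blast
    then show "k \<in> {..card (verts G)}" using finite_verts[OF g]
      by (simp add: independent_def card_mono)
  qed
  then have "finite ?X" using finite_subset by blast
  moreover have "card I \<in> ?X" using I f by blast
  ultimately show ?thesis unfolding fork_number_def by (rule Max_ge)
qed

lemma star_ge:
  assumes g: "is_graph G"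
  shows "degL_len G c s \<le> star_number G c"
proof -
  let ?X = "{card R | R. finite R \<and> is_star G c R}"
  let ?P = "{xs. is_path G xs}"
  have fP: "finite ?P" using finite_paths[OF g] .
  have "?X \<subseteq> {..card ?P}"
  proof
    fix k assume "k \<in> ?X"
    then obtain R where R: "k = card R" "is_star G c R" by blast
    have "R \<subseteq> ?P" using R(2) unfolding is_star_def by (auto dest: ray_path)
    then show "k \<in> {..card ?P}" using R(1) card_mono[OF fP] by simp
  qed
  then have "finite ?X" using finite_subset by blast
  moreover have "card {xs. ray G c s xs} \<in> ?X"
  proof -
    have "{xs. ray G c s xs} \<subseteq> ?P" by (auto dest: ray_path)
    then have "finite {xs. ray G c s xs}" using fP finite_subset by blast
    moreover have "is_star G c {xs. ray G c s xs}" unfolding is_star_def by blast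
    ultimately show ?thesis by blast
  qed
  ultimately show ?thesis unfolding degL_len_def star_number_def by (rule Max_ge)
qed

lemma C_ge:
  assumes g: "is_graph G" and c: "C_gadget G d k xs"
  shows "k \<le> C_number G d"
proof -
  let ?X = "{k. \<exists>xs. C_gadget G d k xs}"
  have "?X \<subseteq> {..card (verts G)}"
  proof
    fix m assume "m \<in> ?X"
    then obtain ys where "C_gadget G d m ys" by blast
    then have "is_path G ys" "length ys = Suc m" by (auto simp: C_gadget_def)
    then show "m \<in> {..card (verts G)}" using path_len[OF g] by fastforce
  qed
  then have "finite ?X" using finite_subset by blast
  moreover have "k \<in> ?X" using c by blast
  ultimately show ?thesis unfolding C_number_def by (rule Max_ge)
qed

lemma ray_C: "ray G a s r \<Longrightarrow> C_gadget G 1 a r"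
proof -
  assume r: "ray G a s r"
  have "\<forall>i. 1 \<le> i \<and> i < a \<longrightarrow> deg G (r ! i) = 2" using ray_inner[OF r] by blast
  then show ?thesis unfolding C_gadget_def using ray_path[OF r] ray_len[OF r] by blast
qed

lemma ray_bound: "is_graph G \<Longrightarrow> ray G a s r \<Longrightarrow> a \<le> C_number G 1"
proof -
  assume g: "is_graph G" and r: "ray G a s r"
  show ?thesis using C_ge[OF g ray_C[OF r]] .
qed

lemma msn_le:
  assumes g: "is_graph G" and S: "S \<subseteq> verts G"
    and loc: "\<forall>v\<in>verts G - S. card {u \<in> verts G - S. {u, v} \<in> edges G} \<le> 1"
  shows "matching_split_number G \<le> card S"
proof -
  let ?X = "{card S | S. S \<subseteq> verts G \<and>
      (\<forall>v\<in>verts G - S. card {u \<in> verts G - S. {u, v} \<in> edges G} \<le> 1)}"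
  have "?X \<subseteq> {..card (verts G)}"
  proof
    fix k assume "k \<in> ?X"
    then obtain T where "k = card T" "T \<subseteq> verts G" by blast
    then show "k \<in> {..card (verts G)}" using finite_verts[OF g] by (simp add: card_mono)
  qed
  then have "finite ?X" using finite_subset by blast
  moreover have "card S \<in> ?X" using S loc by blast
  ultimately show ?thesis unfolding matching_split_number_def by (rule Min_le)
qed



definition Src :: "'a graph \<Rightarrow> 'a set" where "Src G = {v \<in> verts G. deg G v > 2}"
definition cdeg :: "'a graph \<Rightarrow> 'a \<Rightarrow> nat" where "cdeg G v = card (cnbrs G v)"

lemma core_vert: "core G v \<Longrightarrow> v \<in> verts G"
  by (simp add: core_def)

lemma src_core: "v \<in> Src G \<Longrightarrow> core G v"
proof -
  assume "v \<in> Src G"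
  then have "v \<in> verts G" "deg G v > 2" by (auto simp: Src_def)
  then show ?thesis by (rule deg_gt2_core)
qed

lemma finite_Src: "is_graph G \<Longrightarrow> finite (Src G)"
  unfolding Src_def by (drule finite_verts) simp

lemma nodeg0:
  assumes t: "is_tree G" and c: "2 \<le> card (verts G)" and v: "v \<in> verts G"
  shows "1 \<le> deg G v"
proof (rule ccontr)
  assume "\<not> 1 \<le> deg G v"
  then have d0: "deg G v = 0" by simp
  have g: "is_graph G" using t by (rule tree_graph)
  have "nbrs G v = {}" using d0 finite_nbrs[OF g, of v] by (simp add: deg_nbrs)
  then have cl: "\<forall>x\<in>{v}. \<forall>u. {u, x} \<in> edges G \<longrightarrow> u \<in> {v}" by (simp add: nbrs_def)
  have "verts G \<subseteq> {v}" using closed_all[OF t _ v cl] by simp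
  then have "card (verts G) \<le> card {v}" by (intro card_mono) simp_all
  then show False using c by simp
qed

lemma rays_empty_nonsrc: "\<not> deg G v > 2 \<Longrightarrow> rays G v = {}"
  unfolding rays_def by (auto dest: ray_src)

lemma core_nonsrc:
  assumes t: "is_tree G" and c: "2 \<le> card (verts G)"
    and hB: "\<forall>v\<in>verts G. deg G v = 1 \<longrightarrow> \<not> core G v"
    and cv: "core G v" and ns: "\<not> deg G v > 2"
  shows "deg G v = 2 \<and> cdeg G v = 2"
proof -
  have g: "is_graph G" using t by (rule tree_graph)
  have v: "v \<in> verts G" using cv by (rule core_vert)
  have "1 \<le> deg G v" using nodeg0[OF t c v] .
  moreover have "deg G v \<noteq> 1" using hB v cv by blast
  ultimately have d2: "deg G v = 2" using ns by simp
  have "deg G v = card (cnbrs G v) + card (rays G v)" using deg_split[OF g cv] .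
  then show ?thesis using d2 rays_empty_nonsrc[OF ns] by (simp add: cdeg_def)
qed

lemma leaf_is_last:
  assumes g: "is_graph G" and hB: "\<forall>v\<in>verts G. deg G v = 1 \<longrightarrow> \<not> core G v"
    and l: "l \<in> verts G" and d: "deg G l = 1"
  shows "\<exists>a s r. ray G a s r \<and> last r = l"
proof -
  have "\<not> core G l" using hB l d by blast
  then obtain a s r j where r: "ray G a s r" "1 \<le> j" "j \<le> a" "r ! j = l"
    using l unfolding core_def by blast
  have "j = a"
  proof (rule ccontr)
    assume "j \<noteq> a"
    then have "j < a" using r by simp
    then have "deg G (r ! j) = 2" using ray_inner[OF r(1) r(2)] by simp
    then show False using d r(4) by simp
  qed
  then show ?thesis using r ray_last[OF r(1)] by auto
qed

lemma sum_rays_leaves: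
  assumes g: "is_graph G" and hB: "\<forall>v\<in>verts G. deg G v = 1 \<longrightarrow> \<not> core G v"
  shows "(\<Sum>s\<in>Src G. card (rays G s)) = card {v \<in> verts G. deg G v = 1}"
proof -
  let ?AR = "\<Union>s\<in>Src G. rays G s"
  have fS: "finite (Src G)" using finite_Src[OF g] .
  have disj: "\<forall>s\<in>Src G. \<forall>s'\<in>Src G. s \<noteq> s' \<longrightarrow> rays G s \<inter> rays G s' = {}"
  proof (intro ballI impI)
    fix s s' assume "s \<in> Src G" "s' \<in> Src G" "s \<noteq> s'"
    show "rays G s \<inter> rays G s' = {}"
    proof (rule ccontr)
      assume "rays G s \<inter> rays G s' \<noteq> {}"
      then obtain r where "r \<in> rays G s" "r \<in> rays G s'" by blast
      then obtain a b where "ray G a s r" "ray G b s' r" unfolding rays_def by blast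
      then have "s = s'" using ray_0 by metis
      then show False using \<open>s \<noteq> s'\<close> by simp
    qed
  qed
  have c1: "card ?AR = (\<Sum>s\<in>Src G. card (rays G s))"
    using card_UN_disjoint[OF fS] finite_rays[OF g] disj by blast
  have inj: "inj_on last ?AR"
  proof (rule inj_onI)
    fix r r' assume r: "r \<in> ?AR" and r': "r' \<in> ?AR" and e: "last r = last r'"
    obtain s a where "ray G a s r" using r unfolding rays_def by blast
    moreover obtain s' b where "ray G b s' r'" using r' unfolding rays_def by blast
    ultimately show "r = r'" using ray_unique_last[OF g _ _ e] by blast
  qed
  have img: "last ` ?AR = {v \<in> verts G. deg G v = 1}"
  proof
    show "last ` ?AR \<subseteq> {v \<in> verts G. deg G v = 1}"
    proof
      fix v assume "v \<in> last ` ?AR"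
      then obtain r s a where r: "ray G a s r" and v: "v = last r" unfolding rays_def by blast
      have "v = r ! a" using v ray_last[OF r] by simp
      moreover have "r ! a \<in> set r" using ray_len[OF r] by simp
      ultimately show "v \<in> {v \<in> verts G. deg G v = 1}" using ray_set[OF r] ray_end[OF r] by auto
    qed
  next
    show "{v \<in> verts G. deg G v = 1} \<subseteq> last ` ?AR"
    proof
      fix v assume v: "v \<in> {v \<in> verts G. deg G v = 1}"
      then obtain a s r where r: "ray G a s r" and l: "last r = v"
        using leaf_is_last[OF g hB] by blast
      have "s \<in> Src G" using ray_s_vert[OF r] ray_src[OF r] by (simp add: Src_def)
      then have "r \<in> ?AR" using r unfolding rays_def by blast
      then show "v \<in> last ` ?AR" using l by blast
    qed
  qed
  have "card (last ` ?AR) = card ?AR" using card_image[OF inj] .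
  then show ?thesis using c1 img by simp
qed

lemma caseB_identity:
  assumes t: "is_tree G" and c: "2 \<le> card (verts G)"
    and hB: "\<forall>v\<in>verts G. deg G v = 1 \<longrightarrow> \<not> core G v"
  shows "(\<Sum>s\<in>Src G. cdeg G s) + 2 = 2 * card (Src G)"
proof -
  have g: "is_graph G" using t by (rule tree_graph)
  have fV: "finite (verts G)" using finite_verts[OF g] .
  let ?L = "{v \<in> verts G. deg G v = 1}"
  let ?D = "{v \<in> verts G. deg G v = 2}"
  let ?S = "Src G"
  have hs: "(\<Sum>v\<in>verts G. deg G v) + 2 = 2 * card (verts G)"
    using handshake[OF g] tree_edges[OF t] by simp
  have split: "verts G = ?L \<union> ?D \<union> ?S"
  proof
    show "verts G \<subseteq> ?L \<union> ?D \<union> ?S"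
    proof
      fix v assume v: "v \<in> verts G"
      have "1 \<le> deg G v" using nodeg0[OF t c v] .
      then have "deg G v = 1 \<or> deg G v = 2 \<or> deg G v > 2" by arith
      then show "v \<in> ?L \<union> ?D \<union> ?S" using v by (auto simp: Src_def)
    qed
  qed (auto simp: Src_def)
  have fL: "finite ?L" "finite ?D" "finite ?S" using fV by (auto simp: Src_def)
  have d1: "?L \<inter> ?D = {}" "(?L \<union> ?D) \<inter> ?S = {}" by (auto simp: Src_def)
  have sV: "(\<Sum>v\<in>verts G. deg G v) = (\<Sum>v\<in>?L. deg G v) + (\<Sum>v\<in>?D. deg G v) + (\<Sum>v\<in>?S. deg G v)"
    using split sum.union_disjoint[of "?L \<union> ?D" ?S "deg G"] sum.union_disjoint[of ?L ?D "deg G"] fL d1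
    by simp
  have cV: "card (verts G) = card ?L + card ?D + card ?S"
    using split card_Un_disjoint[of "?L \<union> ?D" ?S] card_Un_disjoint[of ?L ?D] fL d1 by simp
  have sL: "(\<Sum>v\<in>?L. deg G v) = card ?L" by simp
  have sD: "(\<Sum>v\<in>?D. deg G v) = 2 * card ?D" by simp
  have sS: "(\<Sum>v\<in>?S. deg G v) = (\<Sum>v\<in>?S. cdeg G v) + (\<Sum>v\<in>?S. card (rays G v))"
  proof -
    have "(\<Sum>v\<in>?S. deg G v) = (\<Sum>v\<in>?S. cdeg G v + card (rays G v))"
    proof (rule sum.cong)
      fix x assume "x \<in> ?S"
      then show "deg G x = cdeg G x + card (rays G x)" using deg_split[OF g src_core] by (simp add: cdeg_def)
    qed simp
    then show ?thesis by (simp add: sum.distrib)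
  qed
  have sR: "(\<Sum>v\<in>?S. card (rays G v)) = card ?L" using sum_rays_leaves[OF g hB] .
  show ?thesis using hs sV cV sL sD sS sR by simp
qed


lemma sum_ind:
  fixes A :: "'b set"
  assumes "finite A"
  shows "(\<Sum>s\<in>A. if P s then 1 else 0) = (card {s \<in> A. P s} :: nat)"
proof -
  have "card {s \<in> A. P s} = sum (\<lambda>_. 1) {s \<in> A. P s}" by (rule card_eq_sum)
  also have "\<dots> = (\<Sum>s\<in>A. if P s then 1 else 0)" by (rule sum.inter_filter[OF assms])
  finally show ?thesis by simp
qed

lemma A_identity:
  assumes t: "is_tree G" and c: "2 \<le> card (verts G)"
    and hB: "\<forall>v\<in>verts G. deg G v = 1 \<longrightarrow> \<not> core G v"
  shows "(\<Sum>s\<in>{s \<in> Src G. cdeg G s \<noteq> 2}. cdeg G s) + 2 = 2 * card {s \<in> Src G. cdeg G s \<noteq> 2}"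
proof -
  have g: "is_graph G" using t by (rule tree_graph)
  let ?A = "{s \<in> Src G. cdeg G s \<noteq> 2}"
  let ?B = "{s \<in> Src G. cdeg G s = 2}"
  have fS: "finite (Src G)" using finite_Src[OF g] .
  have fA: "finite ?A" "finite ?B" using fS by auto
  have sp: "Src G = ?A \<union> ?B" by auto
  have dj: "?A \<inter> ?B = {}" by auto
  have "(\<Sum>s\<in>Src G. cdeg G s) = (\<Sum>s\<in>?A. cdeg G s) + (\<Sum>s\<in>?B. cdeg G s)"
    using sum.union_disjoint[OF fA dj, of "cdeg G"] sp by simp
  moreover have "(\<Sum>s\<in>?B. cdeg G s) = 2 * card ?B" by simp
  moreover have "card (Src G) = card ?A + card ?B" using card_Un_disjoint[OF fA dj] sp by simp
  ultimately show ?thesis using caseB_identity[OF t c hB] by simp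
qed

lemma A_card:
  assumes t: "is_tree G" and c: "2 \<le> card (verts G)"
    and hB: "\<forall>v\<in>verts G. deg G v = 1 \<longrightarrow> \<not> core G v"
  shows "card {s \<in> Src G. cdeg G s \<noteq> 2} + 2 \<le> 3 * card {s \<in> Src G. cdeg G s = 0} + 2 * card {s \<in> Src G. cdeg G s = 1}"
    and "(\<Sum>s\<in>{s \<in> Src G. cdeg G s \<noteq> 2}. cdeg G s) \<le> 2 * card {s \<in> Src G. cdeg G s \<noteq> 2}"
proof -
  have g: "is_graph G" using t by (rule tree_graph)
  let ?A = "{s \<in> Src G. cdeg G s \<noteq> 2}"
  have fA: "finite ?A" using finite_Src[OF g] by auto
  have id: "(\<Sum>s\<in>?A. cdeg G s) + 2 = 2 * card ?A" using A_identity[OF t c hB] .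
  have "(\<Sum>s\<in>?A. 3::nat) \<le> (\<Sum>s\<in>?A. cdeg G s + 3 * (if cdeg G s = 0 then 1 else 0) + 2 * (if cdeg G s = 1 then 1 else 0))"
  proof (rule sum_mono)
    fix s assume "s \<in> ?A"
    then have "cdeg G s \<noteq> 2" by simp
    then show "(3::nat) \<le> cdeg G s + 3 * (if cdeg G s = 0 then 1 else 0) + 2 * (if cdeg G s = 1 then 1 else 0)"
      by (cases "cdeg G s = 0"; cases "cdeg G s = 1") auto
  qed
  also have "\<dots> = (\<Sum>s\<in>?A. cdeg G s) + 3 * (\<Sum>s\<in>?A. if cdeg G s = 0 then 1 else 0) + 2 * (\<Sum>s\<in>?A. if cdeg G s = 1 then 1 else 0)"
    by (simp add: sum.distrib sum_distrib_left)
  also have "(\<Sum>s\<in>?A. if cdeg G s = 0 then 1 else 0) = card {s \<in> ?A. cdeg G s = 0}" using sum_ind[OF fA] .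
  also have "(\<Sum>s\<in>?A. if cdeg G s = 1 then 1 else 0) = card {s \<in> ?A. cdeg G s = 1}" using sum_ind[OF fA] .
  also have "{s \<in> ?A. cdeg G s = 0} = {s \<in> Src G. cdeg G s = 0}" by auto
  also have "{s \<in> ?A. cdeg G s = 1} = {s \<in> Src G. cdeg G s = 1}" by auto
  finally have "3 * card ?A \<le> (\<Sum>s\<in>?A. cdeg G s) + 3 * card {s \<in> Src G. cdeg G s = 0} + 2 * card {s \<in> Src G. cdeg G s = 1}"
    by simp
  then show "card ?A + 2 \<le> 3 * card {s \<in> Src G. cdeg G s = 0} + 2 * card {s \<in> Src G. cdeg G s = 1}"
    using id by simp
  show "(\<Sum>s\<in>?A. cdeg G s) \<le> 2 * card ?A" using id by simp
qed

lemma A0_unique: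
  assumes t: "is_tree G" and s: "s \<in> Src G" "cdeg G s = 0" and tt: "u \<in> Src G" "cdeg G u = 0"
  shows "s = u"
proof (rule ccontr)
  assume ne: "s \<noteq> u"
  have g: "is_graph G" using t by (rule tree_graph)
  have cs: "core G s" using src_core[OF s(1)] .
  have sv: "s \<in> verts G" using core_vert[OF cs] .
  have fc: "finite (cnbrs G s)" using finite_nbrs[OF g, of s] by (simp add: cnbrs_def)
  have ce: "cnbrs G s = {}" using s(2) fc by (simp add: cdeg_def)
  define X where "X = insert s (\<Union>r\<in>rays G s. set r)"
  have nbs: "y \<in> X" if y: "y \<in> nbrs G s" for y
  proof -
    have "\<not> core G y" using y ce by (auto simp: cnbrs_def)
    then obtain a r where r: "ray G a s r" "r ! 1 = y" using noncore_nbr[OF g cs y] by blast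
    have "r ! 1 \<in> set r" using ray_len[OF r(1)] ray_pos[OF r(1)] by simp
    then show ?thesis using r unfolding X_def rays_def by blast
  qed
  have cl: "\<forall>x\<in>X. \<forall>y. {y, x} \<in> edges G \<longrightarrow> y \<in> X"
  proof (intro ballI allI impI)
    fix x y assume x: "x \<in> X" and e: "{y, x} \<in> edges G"
    have yx: "y \<in> nbrs G x" using e by (simp add: nbrs_def)
    show "y \<in> X"
    proof (cases "x = s")
      case True then show ?thesis using nbs yx by simp
    next
      case False
      then obtain r a where r: "ray G a s r" and xr: "x \<in> set r" using x unfolding X_def rays_def by blast
      obtain j where j: "j < length r" "r ! j = x" using xr by (auto simp: in_set_conv_nth)
      have "j \<noteq> 0"
      proof
        assume "j = 0" then have "x = s" using j ray_0[OF r] by simp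
        then show False using False by simp
      qed
      then have j1: "1 \<le> j" "j \<le> a" using j ray_len[OF r] by auto
      have "y = r ! (j - 1) \<or> (j < a \<and> y = r ! Suc j)" using ray_nbr[OF g r j1] yx j by simp
      moreover have "j - 1 < length r" using j by simp
      moreover have "j < a \<longrightarrow> Suc j < length r" using ray_len[OF r] by simp
      ultimately have "y \<in> set r" by (auto simp del: nth_mem intro: nth_mem)
      then show ?thesis using r unfolding X_def rays_def by blast
    qed
  qed
  have "verts G \<subseteq> X" using closed_all[OF t _ sv cl] unfolding X_def by simp
  moreover have uv: "u \<in> verts G" using tt(1) by (simp add: Src_def)
  ultimately have "u \<in> X" by blast
  then obtain r a where r: "ray G a s r" and ur: "u \<in> set r" using ne unfolding X_def rays_def by blast
  obtain j where j: "j < length r" "r ! j = u" using ur by (auto simp: in_set_conv_nth)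
  have "j \<noteq> 0"
  proof
    assume "j = 0" then have "u = s" using j ray_0[OF r] by simp
    then show False using ne by simp
  qed
  then have "1 \<le> j" "j \<le> a" using j ray_len[OF r] by auto
  then have "deg G u \<le> 2" using ray_deg_le2[OF r] j by auto
  then show False using tt(1) by (simp add: Src_def)
qed

lemma A0_card:
  assumes t: "is_tree G"
  shows "card {s \<in> Src G. cdeg G s = 0} \<le> 1"
proof -
  have g: "is_graph G" using t by (rule tree_graph)
  have f: "finite {s \<in> Src G. cdeg G s = 0}" using finite_Src[OF g] by simp
  have "\<forall>a\<in>{s \<in> Src G. cdeg G s = 0}. \<forall>b\<in>{s \<in> Src G. cdeg G s = 0}. a = b"
    using A0_unique[OF t] by blast
  then show ?thesis using card_le_Suc0_iff_eq[OF f] by simp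
qed



lemma fork_exists:
  assumes t: "is_tree G" and s: "s \<in> Src G" and c1: "cdeg G s = 1" and h1: "C_number G 1 < B1"
  shows "\<exists>a b. 1 \<le> a \<and> a < B1 \<and> 1 \<le> b \<and> b < B1 \<and> is_fork G a b s"
proof -
  have g: "is_graph G" using t by (rule tree_graph)
  have cs: "core G s" using src_core[OF s] .
  have sv: "s \<in> verts G" and sd: "deg G s > 2" using s by (auto simp: Src_def)
  have ds: "deg G s = 1 + card (rays G s)" using deg_split[OF g cs] c1 by (simp add: cdeg_def)
  then have cr: "2 \<le> card (rays G s)" using sd by simp
  have fr: "finite (rays G s)" using finite_rays[OF g] .
  obtain r1 r2 where r12: "r1 \<in> rays G s" "r2 \<in> rays G s" "r1 \<noteq> r2"
    using two_verts[OF fr cr] by blast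
  obtain a1 where ra1: "ray G a1 s r1" using r12(1) unfolding rays_def by blast
  obtain a2 where ra2: "ray G a2 s r2" using r12(2) unfolding rays_def by blast
  have b1: "1 \<le> a1" "a1 < B1" using ray_pos[OF ra1] ray_bound[OF g ra1] h1 by auto
  have b2: "1 \<le> a2" "a2 < B1" using ray_pos[OF ra2] ray_bound[OF g ra2] h1 by auto
  have src: "is_source G s" using sv sd by (simp add: is_source_def)
  have lbar: "degLbar G s = 1" using ds by (simp add: degLbar_def degL_rays)
  have fin: "finite {xs. ray G a s xs}" for a
  proof -
    have "{xs. ray G a s xs} \<subseteq> rays G s" unfolding rays_def by blast
    then show ?thesis using fr finite_subset by blast
  qed
  have "is_fork G a1 a2 s"
  proof (cases "a1 = a2")
    case True
    have "{r1, r2} \<subseteq> {xs. ray G a1 s xs}" using ra1 ra2 True by simp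
    then have "card {r1, r2} \<le> card {xs. ray G a1 s xs}" using fin by (rule card_mono[rotated])
    then have "1 < degL_len G a1 s" using r12(3) by (simp add: degL_len_def)
    then show ?thesis using True src lbar by (simp add: is_fork_def)
  next
    case False
    have "r1 \<in> {xs. ray G a1 s xs}" using ra1 by simp
    then have "0 < degL_len G a1 s" using fin[of a1] by (auto simp: degL_len_def card_gt_0_iff)
    moreover have "r2 \<in> {xs. ray G a2 s xs}" using ra2 by simp
    then have "0 < degL_len G a2 s" using fin[of a2] by (auto simp: degL_len_def card_gt_0_iff)
    ultimately show ?thesis using False src lbar by (simp add: is_fork_def)
  qed
  then show ?thesis using b1 b2 by blast
qed

lemma A1_bound:
  assumes t: "is_tree G" and hF: "\<forall>a b. 0 < a \<longrightarrow> 0 < b \<longrightarrow> fork_number G a b < BF"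
    and h1: "C_number G 1 < B1"
  shows "card {s \<in> Src G. cdeg G s = 1} \<le> B1 * B1 * (2 * BF)"
proof -
  have g: "is_graph G" using t by (rule tree_graph)
  let ?A1 = "{s \<in> Src G. cdeg G s = 1}"
  let ?P = "{1..<B1} \<times> {1..<B1}"
  define tau where "tau s = (SOME p. p \<in> ?P \<and> is_fork G (fst p) (snd p) s)" for s
  have tau: "tau s \<in> ?P \<and> is_fork G (fst (tau s)) (snd (tau s)) s" if s: "s \<in> ?A1" for s
  proof -
    obtain a b where ab: "1 \<le> a \<and> a < B1 \<and> 1 \<le> b \<and> b < B1 \<and> is_fork G a b s"
      using fork_exists[OF t _ _ h1, of s] s by auto
    then have "\<exists>p. p \<in> ?P \<and> is_fork G (fst p) (snd p) s"
      by (intro exI[of _ "(a, b)"]) auto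
    then show ?thesis unfolding tau_def by (rule someI_ex)
  qed
  have fP: "finite ?P" by simp
  have sub: "?A1 \<subseteq> (\<Union>p\<in>?P. {s \<in> ?A1. tau s = p})" using tau by blast
  have fA1: "finite ?A1" using finite_Src[OF g] by simp
  have each: "card {s \<in> ?A1. tau s = p} \<le> 2 * BF" if p: "p \<in> ?P" for p
  proof -
    let ?Q = "{s \<in> ?A1. tau s = p}"
    let ?adj = "\<lambda>u v. {u, v} \<in> edges G"
    have fQ: "finite ?Q" by (rule rev_finite_subset[OF fA1]) auto
    have one: "\<forall>x\<in>?Q. \<forall>y\<in>?Q. \<forall>y'\<in>?Q. ?adj x y \<and> ?adj x y' \<longrightarrow> y = y'"
    proof (intro ballI impI)
      fix x y y' assume x: "x \<in> ?Q" and y: "y \<in> ?Q" and y': "y' \<in> ?Q" and a: "?adj x y \<and> ?adj x y'"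
      have "y \<in> Src G" "y' \<in> Src G" using y y' by auto
      then have "core G y" "core G y'" by (simp_all add: src_core)
      moreover have "y \<in> nbrs G x" "y' \<in> nbrs G x" using a by (auto simp: nbrs_def insert_commute)
      ultimately have "y \<in> cnbrs G x" "y' \<in> cnbrs G x" by (auto simp: cnbrs_def)
      moreover have "card (cnbrs G x) = 1" using x by (simp add: cdeg_def)
      ultimately show "y = y'" using card1_unique by metis
    qed
    have sym: "\<forall>u v. ?adj u v \<longrightarrow> ?adj v u" by (simp add: insert_commute)
    obtain I where I: "I \<subseteq> ?Q" "\<forall>u\<in>I. \<forall>v\<in>I. u \<noteq> v \<longrightarrow> \<not> ?adj u v" "card ?Q \<le> 2 * card I"
      using half_indep[OF fQ one sym] by blast
    have ind: "independent G I"
      unfolding independent_def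
    proof (intro conjI ballI)
      show "I \<subseteq> verts G" using I(1) by (auto simp: Src_def)
    next
      fix u v assume u: "u \<in> I" and v: "v \<in> I"
      show "{u, v} \<notin> edges G"
      proof (cases "u = v")
        case True
        then show ?thesis using edge_verts[OF g] by blast
      next
        case False then show ?thesis using I(2) u v by blast
      qed
    qed
    have fk: "\<forall>s\<in>I. is_fork G (fst p) (snd p) s" using I(1) tau by auto
    have "card I \<le> fork_number G (fst p) (snd p)" using fork_ge[OF g ind fk] .
    moreover have "fork_number G (fst p) (snd p) < BF" using hF p by auto
    ultimately show ?thesis using I(3) by simp
  qed
  have fU: "finite (\<Union>p\<in>?P. {s \<in> ?A1. tau s = p})"
  proof (rule finite_UN_I[OF fP])
    fix p show "finite {s \<in> ?A1. tau s = p}" by (rule rev_finite_subset[OF fA1]) auto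
  qed
  have "card ?A1 \<le> card (\<Union>p\<in>?P. {s \<in> ?A1. tau s = p})"
    using sub by (rule card_mono[rotated]) (rule fU)
  also have "\<dots> \<le> (\<Sum>p\<in>?P. card {s \<in> ?A1. tau s = p})" by (rule card_UN_le[OF fP])
  also have "\<dots> \<le> card ?P * (2 * BF)" using sum_bounded_above[of ?P "\<lambda>p. card {s \<in> ?A1. tau s = p}" "2 * BF"] each by simp
  also have "card ?P \<le> B1 * B1" by (simp add: card_cartesian_product mult_le_mono)
  then have "card ?P * (2 * BF) \<le> B1 * B1 * (2 * BF)" by (rule mult_right_mono) simp
  finally show ?thesis .
qed



lemma caseA:
  assumes t: "is_tree G" and lv: "l \<in> verts G" and d: "deg G l = 1" and cl: "core G l"
  shows "card (verts G) \<le> Suc (C_number G 1)"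
proof -
  have g: "is_graph G" using t by (rule tree_graph)
  have "nbrs G l \<noteq> {}" using d by (auto simp: deg_nbrs)
  then obtain u where un: "u \<in> nbrs G l" by blast
  have e: "{l, u} \<in> edges G" using un by (simp add: nbrs_def insert_commute)
  have uv: "u \<in> verts G" using nbrs_sub[OF g] un by blast
  obtain xs where p: "is_path G xs" and sx: "set xs \<subseteq> verts G" and n2: "2 \<le> length xs"
    and x0: "xs ! 0 = l" and x1: "xs ! 1 = u"
    and inner: "\<forall>i. 1 \<le> i \<and> Suc i < length xs \<longrightarrow> deg G (xs ! i) = 2"
    and lastp: "deg G (last xs) = 2 \<longrightarrow> (\<forall>y\<in>verts G. {y, last xs} \<in> edges G \<longrightarrow> y = xs ! (length xs - 2))"
    using max_walk[OF t order_refl e lv uv, of "\<lambda>v. deg G v = 2"] by blast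
  define n where "n = length xs"
  have ne: "xs \<noteq> []" using n2 by auto
  have zl: "last xs = xs ! (n - 1)" using ne by (simp add: last_conv_nth n_def)
  have nn: "Suc (n - 2) = n - 1" "n - 1 < n" using n2 n_def by auto
  have pz: "xs ! (n - 2) \<in> nbrs G (last xs)" using path_nbr1[OF p, of "n - 2"] nn zl n_def by simp
  have fz: "finite (nbrs G (last xs))" using finite_nbrs[OF g] .
  have dz2: "deg G (last xs) \<noteq> 2"
  proof
    assume dz: "deg G (last xs) = 2"
    have "nbrs G (last xs) \<subseteq> {xs ! (n - 2)}"
    proof
      fix y assume y: "y \<in> nbrs G (last xs)"
      then have "y \<in> verts G" "{y, last xs} \<in> edges G" using nbrs_sub[OF g] by (auto simp: nbrs_def)
      then show "y \<in> {xs ! (n - 2)}" using lastp dz n_def by simp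
    qed
    then have "card (nbrs G (last xs)) \<le> 1" using card_mono[of "{xs ! (n - 2)}"] by fastforce
    then show False using dz by (simp add: deg_nbrs)
  qed
  have dzg: "\<not> deg G (last xs) > 2"
  proof
    assume dz: "deg G (last xs) > 2"
    let ?r = "rev xs"
    have lr: "length ?r = Suc (n - 1)" using n2 n_def by simp
    have r0: "?r ! 0 = last xs" using zl ne n_def by (simp add: rev_nth)
    have rn: "?r ! (n - 1) = l" using x0 n2 n_def by (simp add: rev_nth)
    have ri: "\<forall>i. 1 \<le> i \<and> i < n - 1 \<longrightarrow> deg G (?r ! i) = 2"
    proof (intro allI impI)
      fix i assume i: "1 \<le> i \<and> i < n - 1"
      have il: "i < length xs" using i n_def by arith
      have "?r ! i = xs ! (length xs - Suc i)" using rev_nth[OF il] .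
      then have "?r ! i = xs ! (n - 1 - i)" using n_def by simp
      moreover have "1 \<le> n - 1 - i" "Suc (n - 1 - i) < n" using i by auto
      ultimately show "deg G (?r ! i) = 2" using inner n_def by simp
    qed
    have "two_path G (n - 1) ?r"
      unfolding two_path_def using path_rev[OF p] lr ri r0 rn dz d n2 n_def by simp
    then have "ray G (n - 1) (last xs) ?r" unfolding ray_def using r0 rn dz d by simp
    then have "\<not> core G (?r ! (n - 1))" by (rule ray_noncore) (use n2 n_def in auto)
    then show False using rn cl by simp
  qed
  have "1 \<le> deg G (last xs)" using pz fz by (auto simp: deg_nbrs card_gt_0_iff Suc_le_eq)
  then have dz1: "deg G (last xs) = 1" using dz2 dzg by simp
  have cl2: "\<forall>x\<in>set xs. \<forall>y. {y, x} \<in> edges G \<longrightarrow> y \<in> set xs"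
  proof (intro ballI allI impI)
    fix x y assume x: "x \<in> set xs" and e: "{y, x} \<in> edges G"
    have yn: "y \<in> nbrs G x" using e by (simp add: nbrs_def)
    obtain i where i: "i < n" "xs ! i = x" using x by (auto simp: in_set_conv_nth n_def)
    show "y \<in> set xs"
    proof (cases "i = 0")
      case True
      have "xs ! 1 \<in> nbrs G (xs ! 0)" using path_nbr2[OF p, of 0] n2 by simp
      then have "y = xs ! 1" using card1_unique[of "nbrs G l" y "xs ! 1"] d yn i True x0 by (simp add: deg_nbrs)
      then show ?thesis using n2 by simp
    next
      case False
      show ?thesis
      proof (cases "i = n - 1")
        case True
        then have "x = last xs" using zl i by simp
        then have "y = xs ! (n - 2)" using card1_unique[of "nbrs G (last xs)" y "xs ! (n - 2)"] dz1 yn pz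
          by (simp add: deg_nbrs)
        then show ?thesis using n2 n_def by simp
      next
        case False
        then have ii: "1 \<le> i" "Suc i < n" using \<open>i \<noteq> 0\<close> i by auto
        have "deg G (xs ! i) = 2" using inner ii n_def by simp
        then have d2: "card (nbrs G x) = 2" using i(2) by (simp add: deg_nbrs)
        have a1: "xs ! (i - 1) \<in> nbrs G x" using path_nbr1[OF p, of "i - 1"] ii i n_def by simp
        have a2: "xs ! Suc i \<in> nbrs G x" using path_nbr2[OF p, of i] ii i n_def by simp
        have "xs ! (i - 1) \<noteq> xs ! Suc i" using p ii n_def unfolding is_path_def by (simp add: nth_eq_iff_index_eq)
        then have "y = xs ! (i - 1) \<or> y = xs ! Suc i" using card2_cases[OF d2 a1 a2 _ yn] by simp
        then show ?thesis using ii n_def by auto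
      qed
    qed
  qed
  have "l \<in> set xs" using x0 n2 by (auto simp: in_set_conv_nth intro: exI[of _ 0])
  then have "verts G \<subseteq> set xs" using closed_all[OF t _ lv cl2] by simp
  then have cV: "card (verts G) \<le> n" using card_mono[OF _ \<open>verts G \<subseteq> set xs\<close>] card_set_path[OF p] n_def by simp
  have "C_gadget G 1 (n - 1) xs"
    unfolding C_gadget_def using p n2 inner n_def by auto
  then have "n - 1 \<le> C_number G 1" using C_ge[OF g] by blast
  then show ?thesis using cV by simp
qed



lemma cnbrs_sub: "cnbrs G v \<subseteq> nbrs G v"
  by (auto simp: cnbrs_def)

lemma chain_exists:
  assumes t: "is_tree G" and c2: "2 \<le> card (verts G)"
    and hB: "\<forall>v\<in>verts G. deg G v = 1 \<longrightarrow> \<not> core G v"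
    and h1: "C_number G 1 < B1" and cv0: "core G v" and cv: "cdeg G v = 2"
  shows "\<exists>ch m. is_path G ch \<and> (\<forall>x\<in>set ch. core G x) \<and> length ch = Suc m \<and> 1 \<le> m \<and>
     ch ! 0 \<in> Src G \<and> cdeg G (ch ! 0) \<noteq> 2 \<and> ch ! m = v \<and>
     (\<forall>i. 1 \<le> i \<and> i \<le> m \<longrightarrow> cdeg G (ch ! i) = 2) \<and> C_gadget G (B1 + 1) m ch"
proof -
  have g: "is_graph G" using t by (rule tree_graph)
  let ?W = "{x. core G x}"
  have W: "?W \<subseteq> verts G" by (auto dest: core_vert)
  have "cnbrs G v \<noteq> {}" using cv by (auto simp: cdeg_def)
  then obtain w where wn: "w \<in> cnbrs G v" by blast
  have e: "{v, w} \<in> edges G" using wn by (simp add: cnbrs_def nbrs_def insert_commute)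
  have wW: "w \<in> ?W" using wn by (simp add: cnbrs_def)
  have vW: "v \<in> ?W" using cv0 by simp
  obtain xs where p: "is_path G xs" and sx: "set xs \<subseteq> ?W" and n2: "2 \<le> length xs"
    and x0: "xs ! 0 = v" and x1: "xs ! 1 = w"
    and inner: "\<forall>i. 1 \<le> i \<and> Suc i < length xs \<longrightarrow> cdeg G (xs ! i) = 2"
    and lastp: "cdeg G (last xs) = 2 \<longrightarrow> (\<forall>y\<in>?W. {y, last xs} \<in> edges G \<longrightarrow> y = xs ! (length xs - 2))"
    using max_walk[OF t W e vW wW, of "\<lambda>x. cdeg G x = 2"] by blast
  define n where "n = length xs"
  define m where "m = n - 1"
  have ne: "xs \<noteq> []" using n2 by auto
  have zl: "last xs = xs ! (n - 1)" using ne by (simp add: last_conv_nth n_def)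
  have "last xs \<in> set xs" using ne by simp
  then have zW: "core G (last xs)" using sx by blast
  have dz2: "cdeg G (last xs) \<noteq> 2"
  proof
    assume dz: "cdeg G (last xs) = 2"
    have "cnbrs G (last xs) \<subseteq> {xs ! (n - 2)}"
    proof
      fix y assume y: "y \<in> cnbrs G (last xs)"
      then have "core G y" "{y, last xs} \<in> edges G" by (auto simp: cnbrs_def nbrs_def)
      then show "y \<in> {xs ! (n - 2)}" using lastp dz n_def by simp
    qed
    then have "card (cnbrs G (last xs)) \<le> 1" using card_mono[of "{xs ! (n - 2)}"] by fastforce
    then show False using dz by (simp add: cdeg_def)
  qed
  have zS: "last xs \<in> Src G"
  proof (rule ccontr)
    assume "last xs \<notin> Src G"
    then have "\<not> deg G (last xs) > 2" using core_vert[OF zW] by (simp add: Src_def)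
    then have "cdeg G (last xs) = 2" using core_nonsrc[OF t c2 hB zW] by simp
    then show False using dz2 by simp
  qed
  let ?ch = "rev xs"
  have lch: "length ?ch = Suc m" using n2 n_def m_def by simp
  have m1: "1 \<le> m" using n2 n_def m_def by simp
  have c0: "?ch ! 0 = last xs" using zl ne n_def by (simp add: rev_nth)
  have cm: "?ch ! m = v" using x0 n2 n_def m_def by (simp add: rev_nth)
  have pch: "is_path G ?ch" using path_rev[OF p] .
  have sch: "\<forall>x\<in>set ?ch. core G x" using sx by auto
  have cd2: "\<forall>i. 1 \<le> i \<and> i \<le> m \<longrightarrow> cdeg G (?ch ! i) = 2"
  proof (intro allI impI)
    fix i assume i: "1 \<le> i \<and> i \<le> m"
    have il: "i < length xs" using i n_def m_def n2 by arith
    have "?ch ! i = xs ! (length xs - Suc i)" using rev_nth[OF il] .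
    then have ci: "?ch ! i = xs ! (m - i)" using n_def m_def by simp
    show "cdeg G (?ch ! i) = 2"
    proof (cases "m - i = 0")
      case True then show ?thesis using ci x0 cv by simp
    next
      case False
      then have "1 \<le> m - i" "Suc (m - i) < length xs" using i n_def m_def by auto
      then show ?thesis using ci inner by simp
    qed
  qed
  have cg: "C_gadget G (B1 + 1) m ?ch"
    unfolding C_gadget_def
  proof (intro conjI allI impI)
    show "is_path G ?ch" by fact
    show "length ?ch = Suc m" by fact
  next
    fix i assume i: "1 \<le> i \<and> i < m"
    let ?x = "?ch ! i"
    have il: "i < length ?ch" "Suc i < length ?ch" using i lch by auto
    have "?x \<in> set ?ch" using il(1) by (rule nth_mem)
    then have xc: "core G ?x" using sch by blast
    have cx: "card (cnbrs G ?x) = 2" using cd2 i by (simp add: cdeg_def)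
    have ii: "Suc (i - 1) = i" using i by simp
    have pn: "?ch ! (i - 1) \<in> nbrs G ?x" using path_nbr1[OF pch, of "i - 1"] ii il by simp
    have qn: "?ch ! Suc i \<in> nbrs G ?x" using path_nbr2[OF pch, of i] il by simp
    have "i - 1 < length ?ch" using il by simp
    then have m1: "?ch ! (i - 1) \<in> set ?ch" by (rule nth_mem)
    have m2: "?ch ! Suc i \<in> set ?ch" using il(2) by (rule nth_mem)
    note m1 m2
    then have pc: "core G (?ch ! (i - 1))" "core G (?ch ! Suc i)" using sch by blast+
    have pcn: "?ch ! (i - 1) \<in> cnbrs G ?x" "?ch ! Suc i \<in> cnbrs G ?x" using pn qn pc by (auto simp: cnbrs_def)
    have pq: "?ch ! (i - 1) \<noteq> ?ch ! Suc i" using pch il unfolding is_path_def by (simp add: nth_eq_iff_index_eq)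
    show "deg G ?x = 2 \<or> (is_source G ?x \<and> (\<forall>u. {u, ?x} \<in> edges G \<and> u \<noteq> ?ch ! (i - 1) \<and> u \<noteq> ?ch ! Suc i \<longrightarrow>
            (\<exists>a r. a \<le> B1 + 1 \<and> ray G a ?x r \<and> u \<in> set r)))"
    proof (cases "deg G ?x = 2")
      case True then show ?thesis by simp
    next
      case False
      have "card (cnbrs G ?x) \<le> card (nbrs G ?x)" using card_mono[OF finite_nbrs[OF g] cnbrs_sub] .
      then have "deg G ?x > 2" using False cx by (simp add: deg_nbrs)
      then have src: "is_source G ?x" using core_vert[OF xc] by (simp add: is_source_def)
      have "\<exists>a r. a \<le> B1 + 1 \<and> ray G a ?x r \<and> u \<in> set r"
        if u: "{u, ?x} \<in> edges G" "u \<noteq> ?ch ! (i - 1)" "u \<noteq> ?ch ! Suc i" for u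
      proof -
        have un: "u \<in> nbrs G ?x" using u(1) by (simp add: nbrs_def)
        have nc: "\<not> core G u"
        proof
          assume "core G u"
          then have "u \<in> cnbrs G ?x" using un by (simp add: cnbrs_def)
          then have "u = ?ch ! (i - 1) \<or> u = ?ch ! Suc i" using card2_cases[OF cx pcn pq] by simp
          then show False using u by simp
        qed
        obtain a r where r: "ray G a ?x r" "r ! 1 = u" using noncore_nbr[OF g xc un nc] by blast
        have "a \<le> B1 + 1" using ray_bound[OF g r(1)] h1 by simp
        moreover have "u \<in> set r"
        proof -
          have "1 < length r" using ray_len[OF r(1)] ray_pos[OF r(1)] by simp
          then have "r ! 1 \<in> set r" by (rule nth_mem)
          then show ?thesis using r(2) by simp
        qed
        ultimately show ?thesis using r(1) by blast
      qed
      then show ?thesis using src by blast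
    qed
  qed
  show ?thesis
    using pch sch lch m1 c0 zS dz2 cm cd2 cg by (intro exI[of _ ?ch] exI[of _ m]) simp
qed



lemma adj_core:
  assumes p: "is_path G c" and sc: "\<forall>x\<in>set c. core G x"
  shows "\<forall>i. Suc i < length c \<longrightarrow> c ! i \<in> cnbrs G (c ! Suc i) \<and> c ! Suc i \<in> cnbrs G (c ! i)"
proof (intro allI impI)
  fix i assume i: "Suc i < length c"
  have "i < length c" using i by simp
  then have "c ! i \<in> set c" by (rule nth_mem)
  then have c1: "core G (c ! i)" using sc by blast
  have "c ! Suc i \<in> set c" using i by (rule nth_mem)
  then have c2: "core G (c ! Suc i)" using sc by blast
  show "c ! i \<in> cnbrs G (c ! Suc i) \<and> c ! Suc i \<in> cnbrs G (c ! i)"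
    using path_nbr1[OF p i] path_nbr2[OF p i] c1 c2 by (simp add: cnbrs_def)
qed

lemma C2_bound:
  assumes t: "is_tree G" and c2: "2 \<le> card (verts G)"
    and hB: "\<forall>v\<in>verts G. deg G v = 1 \<longrightarrow> \<not> core G v"
    and h1: "C_number G 1 < B1" and hd: "C_number G (B1 + 1) < Bd"
  shows "card {v. core G v \<and> cdeg G v = 2} \<le> (\<Sum>s\<in>{s \<in> Src G. cdeg G s \<noteq> 2}. cdeg G s) * Bd"
proof -
  have g: "is_graph G" using t by (rule tree_graph)
  let ?A = "{s \<in> Src G. cdeg G s \<noteq> 2}"
  let ?C2 = "{v. core G v \<and> cdeg G v = 2}"
  define CH where "CH v ch \<longleftrightarrow> is_path G ch \<and> (\<forall>x\<in>set ch. core G x) \<and> 2 \<le> length ch \<and> ch ! 0 \<in> ?A \<and>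
     ch ! (length ch - 1) = v \<and> (\<forall>i. 1 \<le> i \<and> i < length ch \<longrightarrow> cdeg G (ch ! i) = 2) \<and> length ch - 1 < Bd" for v ch
  have ex: "\<exists>ch. CH v ch" if v: "v \<in> ?C2" for v
  proof -
    have cv: "core G v" "cdeg G v = 2" using v by auto
    obtain ch m where ch: "is_path G ch" "\<forall>x\<in>set ch. core G x" "length ch = Suc m" "1 \<le> m"
      "ch ! 0 \<in> Src G" "cdeg G (ch ! 0) \<noteq> 2" "ch ! m = v"
      "\<forall>i. 1 \<le> i \<and> i \<le> m \<longrightarrow> cdeg G (ch ! i) = 2" "C_gadget G (B1 + 1) m ch"
      using chain_exists[OF t c2 hB h1 cv] by blast
    have "m \<le> C_number G (B1 + 1)" using C_ge[OF g ch(9)] .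
    then have "m < Bd" using hd by simp
    moreover have "\<forall>i. 1 \<le> i \<and> i < length ch \<longrightarrow> cdeg G (ch ! i) = 2" using ch(3) ch(8) by simp
    ultimately have "CH v ch" unfolding CH_def using ch by simp
    then show ?thesis by blast
  qed
  define chs where "chs v = (SOME ch. CH v ch)" for v
  have chv: "CH v (chs v)" if "v \<in> ?C2" for v
    unfolding chs_def using ex[OF that] by (rule someI_ex)
  define f where "f v = ((chs v ! 0, chs v ! 1), length (chs v) - 1)" for v
  have img: "f ` ?C2 \<subseteq> Sigma ?A (cnbrs G) \<times> {..<Bd}"
  proof
    fix y assume "y \<in> f ` ?C2"
    then obtain v where v: "v \<in> ?C2" and y: "y = f v" by blast
    have c: "CH v (chs v)" using chv[OF v] .
    then have p: "is_path G (chs v)" and sc: "\<forall>x\<in>set (chs v). core G x" and l2: "2 \<le> length (chs v)"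
      and a0: "chs v ! 0 \<in> ?A" and lb: "length (chs v) - 1 < Bd" unfolding CH_def by auto
    have "chs v ! 1 \<in> cnbrs G (chs v ! 0)" using adj_core[OF p sc] l2 by simp
    then show "y \<in> Sigma ?A (cnbrs G) \<times> {..<Bd}" using y a0 lb by (simp add: f_def)
  qed
  have inj: "inj_on f ?C2"
  proof (rule inj_onI)
    fix v v' assume v: "v \<in> ?C2" and v': "v' \<in> ?C2" and e: "f v = f v'"
    let ?c = "chs v" and ?c' = "chs v'"
    have c: "CH v ?c" using chv[OF v] .
    have c': "CH v' ?c'" using chv[OF v'] .
    have p: "is_path G ?c" and sc: "\<forall>x\<in>set ?c. core G x" and l2: "2 \<le> length ?c"
      and lv: "?c ! (length ?c - 1) = v" and cd: "\<forall>i. 1 \<le> i \<and> i < length ?c \<longrightarrow> cdeg G (?c ! i) = 2"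
      using c unfolding CH_def by auto
    have p': "is_path G ?c'" and sc': "\<forall>x\<in>set ?c'. core G x" and l2': "2 \<le> length ?c'"
      and lv': "?c' ! (length ?c' - 1) = v'"
      using c' unfolding CH_def by auto
    have e0: "?c ! 0 = ?c' ! 0" and e1: "?c ! 1 = ?c' ! 1" and el: "length ?c - 1 = length ?c' - 1"
      using e by (simp_all add: f_def)
    have ll: "length ?c = length ?c'" using el l2 l2' by simp
    have eq: "\<forall>i. i < length ?c \<and> i < length ?c' \<longrightarrow> ?c ! i = ?c' ! i"
    proof (rule walk_unique[where N = "cnbrs G"])
      show "distinct ?c" using p by (simp add: is_path_def)
      show "distinct ?c'" using p' by (simp add: is_path_def)
      show "?c ! 0 = ?c' ! 0" by fact
      show "?c ! 1 = ?c' ! 1" by fact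
      show "\<forall>i. Suc i < length ?c \<longrightarrow> ?c ! i \<in> cnbrs G (?c ! Suc i) \<and> ?c ! Suc i \<in> cnbrs G (?c ! i)"
        using adj_core[OF p sc] .
      show "\<forall>i. Suc i < length ?c' \<longrightarrow> ?c' ! i \<in> cnbrs G (?c' ! Suc i) \<and> ?c' ! Suc i \<in> cnbrs G (?c' ! i)"
        using adj_core[OF p' sc'] .
      show "\<forall>i. 1 \<le> i \<and> Suc i < length ?c \<longrightarrow> card (cnbrs G (?c ! i)) = 2"
        using cd by (simp add: cdeg_def)
    qed
    have "?c ! (length ?c - 1) = ?c' ! (length ?c - 1)" using eq ll l2 by simp
    then show "v = v'" using lv lv' ll by simp
  qed
  have fA: "finite ?A" using finite_Src[OF g] by simp
  have fT: "finite (Sigma ?A (cnbrs G) \<times> {..<Bd})"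
  proof -
    have "finite (Sigma ?A (cnbrs G))"
      using fA by (rule finite_SigmaI) (simp add: cnbrs_def finite_nbrs[OF g])
    then show ?thesis by simp
  qed
  have "card ?C2 = card (f ` ?C2)" using card_image[OF inj] by simp
  also have "\<dots> \<le> card (Sigma ?A (cnbrs G) \<times> {..<Bd})" using card_mono[OF fT img] .
  also have "\<dots> = card (Sigma ?A (cnbrs G)) * Bd" by (simp add: card_cartesian_product)
  also have "card (Sigma ?A (cnbrs G)) = (\<Sum>s\<in>?A. cdeg G s)"
    using fA by (simp add: cdeg_def cnbrs_def finite_nbrs[OF g])
  finally show ?thesis .
qed



lemma core_bound:
  assumes t: "is_tree G" and c2: "2 \<le> card (verts G)"
    and hB: "\<forall>v\<in>verts G. deg G v = 1 \<longrightarrow> \<not> core G v"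
  shows "card {v. core G v} \<le> card {s \<in> Src G. cdeg G s \<noteq> 2} + card {v. core G v \<and> cdeg G v = 2}"
proof -
  have g: "is_graph G" using t by (rule tree_graph)
  let ?A = "{s \<in> Src G. cdeg G s \<noteq> 2}"
  let ?C2 = "{v. core G v \<and> cdeg G v = 2}"
  have sub: "{v. core G v} \<subseteq> ?A \<union> ?C2"
  proof
    fix v assume v: "v \<in> {v. core G v}"
    then have cv: "core G v" by simp
    show "v \<in> ?A \<union> ?C2"
    proof (cases "deg G v > 2")
      case True
      then have "v \<in> Src G" using core_vert[OF cv] by (simp add: Src_def)
      then show ?thesis using cv by auto
    next
      case False
      then have "cdeg G v = 2" using core_nonsrc[OF t c2 hB cv] by simp
      then show ?thesis using cv by simp
    qed
  qed
  have fA: "finite ?A" using finite_Src[OF g] by simp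
  have "?C2 \<subseteq> verts G" by (auto dest: core_vert)
  then have fC: "finite ?C2" using finite_verts[OF g] finite_subset by blast
  have "card {v. core G v} \<le> card (?A \<union> ?C2)" using card_mono[OF _ sub] fA fC by simp
  also have "\<dots> \<le> card ?A + card ?C2" by (rule card_Un_le)
  finally show ?thesis .
qed

definition Sset :: "'a graph \<Rightarrow> nat \<Rightarrow> 'a set" where
  "Sset G B1 = {v. core G v} \<union> (\<Union>s\<in>Src G. \<Union>c\<in>{3..<B1}. \<Union>r\<in>{r. ray G c s r}. set r)"

lemma Sset_sub: "Sset G B1 \<subseteq> verts G"
proof
  fix v assume "v \<in> Sset G B1"
  then show "v \<in> verts G"
    unfolding Sset_def by (auto dest: core_vert ray_set)
qed

lemma Sset_local:
  assumes g: "is_graph G" and h1: "C_number G 1 < B1"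
  shows "\<forall>v\<in>verts G - Sset G B1. card {u \<in> verts G - Sset G B1. {u, v} \<in> edges G} \<le> 1"
proof
  fix v assume v: "v \<in> verts G - Sset G B1"
  let ?S = "Sset G B1"
  let ?U = "{u \<in> verts G - ?S. {u, v} \<in> edges G}"
  have vv: "v \<in> verts G" and vS: "v \<notin> ?S" using v by auto
  have "\<not> core G v" using vS unfolding Sset_def by auto
  then obtain a s r j where r: "ray G a s r" and j: "1 \<le> j" "j \<le> a" and rj: "r ! j = v"
    using vv unfolding core_def by blast
  have aB: "a < B1" using ray_bound[OF g r] h1 by simp
  have sS: "s \<in> Src G" using ray_s_vert[OF r] ray_src[OF r] by (simp add: Src_def)
  have "j < length r" using j ray_len[OF r] by simp
  then have "r ! j \<in> set r" by (rule nth_mem)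
  then have vr: "v \<in> set r" using rj by simp
  have a2: "a \<le> 2"
  proof (rule ccontr)
    assume "\<not> a \<le> 2"
    then have "a \<in> {3..<B1}" using aB by simp
    then have "v \<in> ?S" using sS r vr unfolding Sset_def by blast
    then show False using vS by simp
  qed
  have Usub: "?U \<subseteq> nbrs G v" by (auto simp: nbrs_def)
  have fn: "finite (nbrs G v)" using finite_nbrs[OF g] .
  show "card ?U \<le> 1"
  proof (cases "j = a")
    case True
    then have "card (nbrs G v) = 1" using ray_end[OF r] rj by (simp add: deg_nbrs)
    then show ?thesis using card_mono[OF fn Usub] by simp
  next
    case False
    then have ja: "j = 1" "a = 2" using j a2 by auto
    have "?U \<subseteq> {r ! 2}"
    proof
      fix u assume u: "u \<in> ?U"
      then have un: "u \<in> nbrs G (r ! j)" using rj by (simp add: nbrs_def)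
      have "u = r ! (j - 1) \<or> (j < a \<and> u = r ! Suc j)" using ray_nbr[OF g r j un] .
      then have "u = r ! 0 \<or> u = r ! 2" using ja by (simp add: numeral_2_eq_2)
      moreover have "r ! 0 \<in> ?S"
      proof -
        have "core G s" using src_core[OF sS] .
        then show ?thesis using ray_0[OF r] unfolding Sset_def by simp
      qed
      ultimately show "u \<in> {r ! 2}" using u by auto
    qed
    then show ?thesis using card_mono[of "{r ! 2}"] by fastforce
  qed
qed

lemma Sset_card:
  assumes g: "is_graph G" and h1: "C_number G 1 < B1"
    and hS: "\<forall>c. 3 \<le> c \<longrightarrow> star_number G c < BS"
  shows "card (Sset G B1) \<le> card {v. core G v} + card (Src G) * (B1 * (BS * B1))"
proof -
  let ?R = "\<Union>s\<in>Src G. \<Union>c\<in>{3..<B1}. \<Union>r\<in>{r. ray G c s r}. set r"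
  have fS: "finite (Src G)" using finite_Src[OF g] .
  have fray: "finite {r. ray G c s r}" for c s
  proof -
    have "{r. ray G c s r} \<subseteq> {xs. is_path G xs}" by (auto dest: ray_path)
    then show ?thesis using finite_paths[OF g] finite_subset by blast
  qed
  have inner: "card (\<Union>r\<in>{r. ray G c s r}. set r) \<le> BS * B1" if c: "c \<in> {3..<B1}" for s c
  proof -
    have "card (\<Union>r\<in>{r. ray G c s r}. set r) \<le> (\<Sum>r\<in>{r. ray G c s r}. card (set r))"
      by (rule card_UN_le[OF fray])
    also have "\<dots> \<le> card {r. ray G c s r} * B1"
    proof -
      have "card (set r) \<le> B1" if r: "r \<in> {r. ray G c s r}" for r
      proof -
        have rr: "ray G c s r" using r by simp
        have "card (set r) = length r" using card_set_path[OF ray_path[OF rr]] .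
        then show ?thesis using ray_len[OF rr] c by simp
      qed
      then show ?thesis using sum_bounded_above[of "{r. ray G c s r}" "\<lambda>r. card (set r)" B1] by simp
    qed
    also have "card {r. ray G c s r} \<le> BS"
    proof -
      have "card {r. ray G c s r} \<le> star_number G c" using star_ge[OF g, of c s] by (simp add: degL_len_def)
      then show ?thesis using hS c by (meson atLeastLessThan_iff le_less_trans less_imp_le_nat)
    qed
    then have "card {r. ray G c s r} * B1 \<le> BS * B1" by (rule mult_right_mono) simp
    finally show ?thesis .
  qed
  have mid: "card (\<Union>c\<in>{3..<B1}. \<Union>r\<in>{r. ray G c s r}. set r) \<le> B1 * (BS * B1)" for s
  proof -
    have "card (\<Union>c\<in>{3..<B1}. \<Union>r\<in>{r. ray G c s r}. set r) \<le> (\<Sum>c\<in>{3..<B1}. card (\<Union>r\<in>{r. ray G c s r}. set r))"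
      by (rule card_UN_le) simp
    also have "\<dots> \<le> card {3..<B1} * (BS * B1)"
      using sum_bounded_above[of "{3..<B1}" "\<lambda>c. card (\<Union>r\<in>{r. ray G c s r}. set r)" "BS * B1"] inner by simp
    also have "\<dots> \<le> B1 * (BS * B1)" by (rule mult_right_mono) simp_all
    finally show ?thesis .
  qed
  have "card ?R \<le> (\<Sum>s\<in>Src G. card (\<Union>c\<in>{3..<B1}. \<Union>r\<in>{r. ray G c s r}. set r))"
    by (rule card_UN_le[OF fS])
  also have "\<dots> \<le> card (Src G) * (B1 * (BS * B1))"
    using sum_bounded_above[of "Src G" "\<lambda>s. card (\<Union>c\<in>{3..<B1}. \<Union>r\<in>{r. ray G c s r}. set r)" "B1 * (BS * B1)"] mid by simp
  finally have cR: "card ?R \<le> card (Src G) * (B1 * (BS * B1))" .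
  have "card (Sset G B1) \<le> card {v. core G v} + card ?R" unfolding Sset_def by (rule card_Un_le)
  then show ?thesis using cR by simp
qed



lemma main_bound:
  assumes t: "is_tree G"
    and hF: "\<forall>a b. 0 < a \<longrightarrow> 0 < b \<longrightarrow> fork_number G a b < BF"
    and hS: "\<forall>c. 3 \<le> c \<longrightarrow> star_number G c < BS"
    and h1: "C_number G 1 < B1" and hd: "C_number G (B1 + 1) < Bd"
  shows "matching_split_number G \<le>
    (3 + 2 * (B1 * B1 * (2 * BF)) + 2 * (3 + 2 * (B1 * B1 * (2 * BF))) * Bd) +
    (3 + 2 * (B1 * B1 * (2 * BF)) + 2 * (3 + 2 * (B1 * B1 * (2 * BF))) * Bd) * (B1 * (BS * B1)) + Suc B1"
    (is "_ \<le> ?KC + ?KC * ?X + Suc B1")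
proof -
  have g: "is_graph G" using t by (rule tree_graph)
  have msnV: "matching_split_number G \<le> card (verts G)"
    using msn_le[OF g order_refl] by simp
  show ?thesis
  proof (cases "card (verts G) \<le> 1")
    case True
    then show ?thesis using msnV by simp
  next
    case False
    then have c2: "2 \<le> card (verts G)" by simp
    show ?thesis
    proof (cases "\<exists>l\<in>verts G. deg G l = 1 \<and> core G l")
      case True
      then obtain l where l: "l \<in> verts G" "deg G l = 1" "core G l" by blast
      have "card (verts G) \<le> Suc (C_number G 1)" using caseA[OF t l] .
      then have "card (verts G) \<le> B1" using h1 by simp
      then show ?thesis using msnV by simp
    next
      case False
      then have hB: "\<forall>v\<in>verts G. deg G v = 1 \<longrightarrow> \<not> core G v" by blast
      let ?A = "{s \<in> Src G. cdeg G s \<noteq> 2}"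
      let ?KA = "3 + 2 * (B1 * B1 * (2 * BF))"
      have cA: "card ?A \<le> ?KA"
      proof -
        have "card ?A + 2 \<le> 3 * card {s \<in> Src G. cdeg G s = 0} + 2 * card {s \<in> Src G. cdeg G s = 1}"
          using A_card(1)[OF t c2 hB] .
        moreover have "card {s \<in> Src G. cdeg G s = 0} \<le> 1" using A0_card[OF t] .
        moreover have "card {s \<in> Src G. cdeg G s = 1} \<le> B1 * B1 * (2 * BF)" using A1_bound[OF t hF h1] .
        ultimately show ?thesis by simp
      qed
      have sA: "(\<Sum>s\<in>?A. cdeg G s) \<le> 2 * ?KA" using A_card(2)[OF t c2 hB] cA by simp
      have cC2: "card {v. core G v \<and> cdeg G v = 2} \<le> 2 * ?KA * Bd"
      proof -
        have "card {v. core G v \<and> cdeg G v = 2} \<le> (\<Sum>s\<in>?A. cdeg G s) * Bd" using C2_bound[OF t c2 hB h1 hd] .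
        also have "\<dots> \<le> 2 * ?KA * Bd" using sA by (rule mult_right_mono) simp
        finally show ?thesis .
      qed
      have cCore: "card {v. core G v} \<le> ?KC"
        using core_bound[OF t c2 hB] cA cC2 by simp
      have cSrc: "card (Src G) \<le> ?KC"
      proof -
        have "Src G \<subseteq> {v. core G v}"
        proof
          fix v assume "v \<in> Src G"
          then show "v \<in> {v. core G v}" by (simp add: src_core)
        qed
        moreover have "finite {v. core G v}"
        proof -
          have "{v. core G v} \<subseteq> verts G" by (auto dest: core_vert)
          then show ?thesis using finite_verts[OF g] finite_subset by blast
        qed
        ultimately have "card (Src G) \<le> card {v. core G v}" by (rule card_mono[rotated])
        then show ?thesis using cCore by simp
      qed
      have "matching_split_number G \<le> card (Sset G B1)"
        using msn_le[OF g Sset_sub Sset_local[OF g h1]] .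
      also have "\<dots> \<le> card {v. core G v} + card (Src G) * ?X" using Sset_card[OF g h1 hS] .
      also have "\<dots> \<le> ?KC + ?KC * ?X"
      proof -
        have m: "card (Src G) * ?X \<le> ?KC * ?X" by (rule mult_right_mono[OF cSrc]) simp
        show ?thesis by (rule add_mono[OF cCore m])
      qed
      finally show ?thesis by simp
    qed
  qed
qed

theorem lemma32:
  fixes \<T> :: "'a graph set"
  assumes "\<forall>T\<in>\<T>. is_tree T"
    and "\<not> matching_splittable \<T>"
  shows "unbounded_fork_number \<T> \<or> unbounded_star_number \<T> \<or> unbounded_C_number \<T>"
proof (rule ccontr)
  assume "\<not> (unbounded_fork_number \<T> \<or> unbounded_star_number \<T> \<or> unbounded_C_number \<T>)"
  then have nF: "\<not> unbounded_fork_number \<T>" and nS: "\<not> unbounded_star_number \<T>" and nC: "\<not> unbounded_C_number \<T>"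
    by auto
  obtain BF0 where BF0: "\<not> (\<exists>a b T. a > 0 \<and> b > 0 \<and> T \<in> \<T> \<and> fork_number T a b \<ge> BF0)"
    using nF unfolding unbounded_fork_number_def by blast
  have BF: "\<forall>a b T. 0 < a \<longrightarrow> 0 < b \<longrightarrow> T \<in> \<T> \<longrightarrow> fork_number T a b < BF0"
    using BF0 by (meson not_le)
  obtain BS where BS0: "\<not> (\<exists>c T. c \<ge> 3 \<and> T \<in> \<T> \<and> star_number T c \<ge> BS)"
    using nS unfolding unbounded_star_number_def by blast
  have BS: "\<forall>c T. 3 \<le> c \<longrightarrow> T \<in> \<T> \<longrightarrow> star_number T c < BS"
    using BS0 by (meson not_le)
  have nC': "\<forall>d>0. \<exists>B. \<forall>T\<in>\<T>. C_number T d < B"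
  proof (intro allI impI)
    fix d :: nat assume d: "d > 0"
    obtain B where "\<not> (\<exists>T\<in>\<T>. C_number T d \<ge> B)" using nC d unfolding unbounded_C_number_def by blast
    then have "\<forall>T\<in>\<T>. C_number T d < B" by (meson not_le)
    then show "\<exists>B. \<forall>T\<in>\<T>. C_number T d < B" by blast
  qed
  obtain B1 where B1: "\<forall>T\<in>\<T>. C_number T 1 < B1" using nC' by auto
  obtain Bd where Bd: "\<forall>T\<in>\<T>. C_number T (B1 + 1) < Bd" using nC' by auto
  let ?M = "(3 + 2 * (B1 * B1 * (2 * BF0)) + 2 * (3 + 2 * (B1 * B1 * (2 * BF0))) * Bd) +
    (3 + 2 * (B1 * B1 * (2 * BF0)) + 2 * (3 + 2 * (B1 * B1 * (2 * BF0))) * Bd) * (B1 * (BS * B1)) + Suc B1"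
  obtain T where T: "T \<in> \<T>" and big: "\<not> matching_split_number T \<le> ?M"
    using assms(2) unfolding matching_splittable_def by blast
  have "matching_split_number T \<le> ?M"
  proof (rule main_bound)
    show "is_tree T" using assms(1) T by blast
    show "\<forall>a b. 0 < a \<longrightarrow> 0 < b \<longrightarrow> fork_number T a b < BF0" using BF T by blast
    show "\<forall>c. 3 \<le> c \<longrightarrow> star_number T c < BS" using BS T by blast
    show "C_number T 1 < B1" using B1 T by blast
    show "C_number T (B1 + 1) < Bd" using Bd T by blast
  qed
  then show False using big by simp
qed


end
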